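(* Let $G=(V,E)$ be a finite simple graph, $\mathbb{K}$ a field, $R=E_{\mathbb{K}}[\mathrm{HSTAB}(G)]$ and $\omega$ the canonical ideal of $R$. Let $n\in\mathbb{Z}$ and $\mu\in\mathbb{Z}^{V^-}$. Then $T^\mu\in\omega^{(n)}$ if and only if $\mu\in U^{(n)}$, where $U^{(n)}$ is the set of $\mu\in\mathbb{Z}^{V^-}$ such that $\mu(z)\ge n$ for all $z\in V$, $\mu^+(K)\le \mu(-\infty)-n$ for every maximal clique $K$ of $G$, and $\mu^+(C)\le \mu(-\infty)\frac{\#C-1}{2}-n$ for every odd cycle $C$ of $G$ without chord and of length at least $5$.
   Context: Graphs are finite simple without loops. For $f\in\mathbb{R}^V$ (or $\mathbb{Z}^{V^-}$) and $B\subseteq V$, $f^+(B)=\sum_{b\in B}f(b)$. An odd cycle is (the vertex set $C$ of) a cycle of odd length; "without chord" means no two non-consecutive vertices are adjacent. $\mathrm{HSTAB}(G)$ is the set of $f\in\mathbb{R}^V$ with $f(x)\ge0$ for all $x\in V$, $f^+(K)\le1$ for every clique $K$, and $f^+(C)\le\frac{\#C-1}{2}$ for every odd cycle $C$. With $-\infty$ a new symbol, $V^-=V\cup\{-\infty\}$, $T^f=\prod_{x\in V^-}T_x^{f(x)}$ for $f\in\mathbb{Z}^{V^-}$, $\deg T_x=0$ ($x\in V$), $\deg T_{-\infty}=1$, the Ehrhart ring is $E_{\mathbb{K}}[\mathrm{HSTAB}(G)]=\mathbb{K}[T^f: f(-\infty)>0,\ \frac{1}{f(-\infty)}f|_V\in\mathrm{HSTAB}(G)]$.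 Its canonical ideal $\omega$ is the $\mathbb{K}$-span of the $T^f$ with $f(-\infty)>0$ and $\frac{1}{f(-\infty)}f|_V$ in the relative interior of $\mathrm{HSTAB}(G)$. For a Noetherian normal domain $R$ with quotient field $Q(R)$, the divisorial ideals form a group under $I\cdot J=R:_{Q(R)}(R:_{Q(R)}IJ)$; $I^{(n)}$ denotes the $n$-th power of $I$ in this group (so $\omega^{(-1)}=R:_{Q(R)}\omega$, $\omega^{(0)}=R$). *)

theory Defs
  imports "HOL-Analysis.Analysis" "HOL-Library.Poly_Mapping" "HOL-Library.Function_Algebras"
begin

definition simple_graph :: "('v::finite \<Rightarrow> 'v \<Rightarrow> bool) \<Rightarrow> bool" where
  "simple_graph E \<longleftrightarrow> (\<forall>x y. E x y \<longrightarrow> E y x) \<and> (\<forall>x. \<not> E x x)"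

definition is_clique :: "('v \<Rightarrow> 'v \<Rightarrow> bool) \<Rightarrow> 'v set \<Rightarrow> bool" where
  "is_clique E K \<longleftrightarrow> (\<forall>x\<in>K. \<forall>y\<in>K. x \<noteq> y \<longrightarrow> E x y)"

definition is_maximal_clique :: "('v \<Rightarrow> 'v \<Rightarrow> bool) \<Rightarrow> 'v set \<Rightarrow> bool" where
  "is_maximal_clique E K \<longleftrightarrow> is_clique E K \<and> (\<forall>K'. is_clique E K' \<and> K \<subseteq> K' \<longrightarrow> K' = K)"

definition is_cycle :: "('v \<Rightarrow> 'v \<Rightarrow> bool) \<Rightarrow> 'v list \<Rightarrow> bool" where
  "is_cycle E xs \<longleftrightarrow> length xs \<ge> 3 \<and> distinct xs \<and>
     (\<forall>i < length xs. E (xs ! i) (xs ! (Suc i mod length xs)))"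

definition chordless :: "('v \<Rightarrow> 'v \<Rightarrow> bool) \<Rightarrow> 'v list \<Rightarrow> bool" where
  "chordless E xs \<longleftrightarrow> (\<forall>i < length xs. \<forall>j < length xs. E (xs ! i) (xs ! j) \<longrightarrow>
       j = Suc i mod length xs \<or> i = Suc j mod length xs)"

definition is_odd_cycle :: "('v \<Rightarrow> 'v \<Rightarrow> bool) \<Rightarrow> 'v set \<Rightarrow> bool" where
  "is_odd_cycle E C \<longleftrightarrow> (\<exists>xs. is_cycle E xs \<and> set xs = C \<and> odd (length xs))"

definition is_chordless_odd_cycle_ge5 :: "('v \<Rightarrow> 'v \<Rightarrow> bool) \<Rightarrow> 'v set \<Rightarrow> bool" where
  "is_chordless_odd_cycle_ge5 E C \<longleftrightarrow>
     (\<exists>xs. is_cycle E xs \<and> chordless E xs \<and> set xs = C \<and> odd (length xs) \<and> length xs \<ge> 5)"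

definition HSTAB :: "('v::finite \<Rightarrow> 'v \<Rightarrow> bool) \<Rightarrow> (real ^ 'v) set" where
  "HSTAB E = {f. (\<forall>x. f $ x \<ge> 0)
              \<and> (\<forall>K. is_clique E K \<longrightarrow> (\<Sum>x\<in>K. f $ x) \<le> 1)
              \<and> (\<forall>C. is_odd_cycle E C \<longrightarrow> (\<Sum>x\<in>C. f $ x) \<le> (real (card C) - 1) / 2)}"

text \<open>V^- is modelled as 'v option, with None playing the role of -\<infinity>.\<close>

type_synonym ('v, 'k) laurent = "('v option \<Rightarrow> int) \<Rightarrow>\<^sub>0 'k"

definition monom :: "('v option \<Rightarrow> int) \<Rightarrow> ('v, 'k::field) laurent" ("T\<^bsup>_\<^esup>") where
  "monom f = Poly_Mapping.single f 1"

definition restrV :: "('v::finite option \<Rightarrow> int) \<Rightarrow> real ^ 'v" where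
  "restrV f = (\<chi> x. real_of_int (f (Some x)) / real_of_int (f None))"

inductive_set ehrhart_ring :: "('v::finite \<Rightarrow> 'v \<Rightarrow> bool) \<Rightarrow> ('v, 'k::field) laurent set"
  for E where
  const: "Poly_Mapping.single 0 c \<in> ehrhart_ring E"
| gen: "f None > 0 \<Longrightarrow> restrV f \<in> HSTAB E \<Longrightarrow> monom f \<in> ehrhart_ring E"
| add: "p \<in> ehrhart_ring E \<Longrightarrow> q \<in> ehrhart_ring E \<Longrightarrow> p + q \<in> ehrhart_ring E"
| mult: "p \<in> ehrhart_ring E \<Longrightarrow> q \<in> ehrhart_ring E \<Longrightarrow> p * q \<in> ehrhart_ring E"

definition canonical_ideal :: "('v::finite \<Rightarrow> 'v \<Rightarrow> bool) \<Rightarrow> ('v, 'k::field) laurent set" where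
  "canonical_ideal E = {p. \<forall>f \<in> Poly_Mapping.keys p. f None > 0 \<and> restrV f \<in> rel_interior (HSTAB E)}"

text \<open>Elements of the quotient field Q(R) are represented as pairs (a,b) with a, b in R, b \<noteq> 0,
  standing for a/b (inside the fraction field of the Laurent polynomial ring, a domain).
  Subsets of Q(R) are sets of such pairs; an element is identified with every
  representing pair.\<close>

type_synonym ('v, 'k) frac = "('v, 'k) laurent \<times> ('v, 'k) laurent"

definition QF :: "('v, 'k::field) laurent set \<Rightarrow> ('v, 'k) frac set" where
  "QF R = {(a, b). a \<in> R \<and> b \<in> R \<and> b \<noteq> 0}"

definition fmul :: "('v, 'k::field) frac \<Rightarrow> ('v, 'k) frac \<Rightarrow> ('v, 'k) frac" where
  "fmul x y = (fst x * fst y, snd x * snd y)"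

definition fadd :: "('v, 'k::field) frac \<Rightarrow> ('v, 'k) frac \<Rightarrow> ('v, 'k) frac" where
  "fadd x y = (fst x * snd y + fst y * snd x, snd x * snd y)"

definition frac_in :: "('v, 'k::field) frac \<Rightarrow> ('v, 'k) laurent set \<Rightarrow> bool" where
  "frac_in x A \<longleftrightarrow> (\<exists>a\<in>A. fst x = a * snd x)"

definition as_frac :: "('v, 'k::field) laurent set \<Rightarrow> ('v, 'k) laurent set \<Rightarrow> ('v, 'k) frac set" where
  "as_frac R A = {x \<in> QF R. frac_in x A}"

definition colon :: "('v, 'k::field) laurent set \<Rightarrow> ('v, 'k) frac set \<Rightarrow> ('v, 'k) frac set" where
  "colon R I = {x \<in> QF R. \<forall>y\<in>I. frac_in (fmul x y) R}"

inductive_set sums_of_products :: "('v, 'k::field) frac set \<Rightarrow> ('v, 'k) frac set \<Rightarrow> ('v, 'k) frac set"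
  for I J where
  zero: "(0, 1) \<in> sums_of_products I J"
| step: "s \<in> sums_of_products I J \<Longrightarrow> x \<in> I \<Longrightarrow> y \<in> J \<Longrightarrow> fadd s (fmul x y) \<in> sums_of_products I J"

text \<open>The group operation on divisorial ideals: I \<cdot> J = R : (R : IJ).\<close>
definition dmul :: "('v, 'k::field) laurent set \<Rightarrow> ('v, 'k) frac set \<Rightarrow> ('v, 'k) frac set \<Rightarrow> ('v, 'k) frac set" where
  "dmul R I J = colon R (colon R (sums_of_products I J))"

definition dpow :: "('v, 'k::field) laurent set \<Rightarrow> ('v, 'k) frac set \<Rightarrow> int \<Rightarrow> ('v, 'k) frac set" where
  "dpow R I n = (if n \<ge> 0 then (dmul R I ^^ nat n) (as_frac R R)
                 else (dmul R (colon R I) ^^ nat (- n)) (as_frac R R))"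

definition mem_frac :: "('v, 'k::field) laurent \<Rightarrow> ('v, 'k) frac set \<Rightarrow> bool" where
  "mem_frac p I \<longleftrightarrow> (\<exists>x\<in>I. fst x = p * snd x)"

definition U_set :: "('v::finite \<Rightarrow> 'v \<Rightarrow> bool) \<Rightarrow> int \<Rightarrow> ('v option \<Rightarrow> int) set" where
  "U_set E n = {\<mu>. (\<forall>z. \<mu> (Some z) \<ge> n)
     \<and> (\<forall>K. is_maximal_clique E K \<longrightarrow> (\<Sum>x\<in>K. \<mu> (Some x)) \<le> \<mu> None - n)
     \<and> (\<forall>C. is_chordless_odd_cycle_ge5 E C \<longrightarrow>
            real_of_int (\<Sum>x\<in>C. \<mu> (Some x)) \<le> real_of_int (\<mu> None) * (real (card C) - 1) / 2 - real_of_int n)}"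

end

theory Submission imports Defs
begin

definition lexl :: "('a \<Rightarrow> nat) \<Rightarrow> ('a \<Rightarrow> int) \<Rightarrow> ('a \<Rightarrow> int) \<Rightarrow> bool" where
  "lexl \<iota> \<mu> \<nu> \<longleftrightarrow> (\<exists>k. \<mu> k < \<nu> k \<and> (\<forall>k'. \<iota> k' < \<iota> k \<longrightarrow> \<mu> k' = \<nu> k'))"

lemma lexl_irrefl: "\<not> lexl \<iota> \<mu> \<mu>"
  by (auto simp: lexl_def)

lemma lexl_trans:
  assumes inj: "inj \<iota>" and "lexl \<iota> \<mu> \<nu>" "lexl \<iota> \<nu> \<rho>"
  shows "lexl \<iota> \<mu> \<rho>"
proof -
  obtain k1 where k1: "\<mu> k1 < \<nu> k1" "\<And>k'. \<iota> k' < \<iota> k1 \<Longrightarrow> \<mu> k' = \<nu> k'"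
    using assms(2) by (auto simp: lexl_def)
  obtain k2 where k2: "\<nu> k2 < \<rho> k2" "\<And>k'. \<iota> k' < \<iota> k2 \<Longrightarrow> \<nu> k' = \<rho> k'"
    using assms(3) by (auto simp: lexl_def)
  show ?thesis
  proof (cases "\<iota> k1" "\<iota> k2" rule: linorder_cases)
    case less
    have "\<mu> k1 < \<rho> k1" using k1(1) k2(2)[OF less] by simp
    moreover have "\<forall>k'. \<iota> k' < \<iota> k1 \<longrightarrow> \<mu> k' = \<rho> k'"
      using k1(2) k2(2) less by fastforce
    ultimately show ?thesis unfolding lexl_def by blast
  next
    case equal
    then have "k1 = k2" using inj by (simp add: inj_eq)
    have "\<mu> k1 < \<rho> k1" using k1(1) k2(1) \<open>k1 = k2\<close> by simp
    moreover have "\<forall>k'. \<iota> k' < \<iota> k1 \<longrightarrow> \<mu> k' = \<rho> k'"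
      using k1(2) k2(2) equal by fastforce
    ultimately show ?thesis unfolding lexl_def by blast
  next
    case greater
    have "\<mu> k2 < \<rho> k2" using k2(1) k1(2)[OF greater] by simp
    moreover have "\<forall>k'. \<iota> k' < \<iota> k2 \<longrightarrow> \<mu> k' = \<rho> k'"
      using k1(2) k2(2) greater by fastforce
    ultimately show ?thesis unfolding lexl_def by blast
  qed
qed

lemma lexl_total:
  fixes \<mu> \<nu> :: "'a::finite \<Rightarrow> int"
  assumes inj: "inj \<iota>" and ne: "\<mu> \<noteq> \<nu>"
  shows "lexl \<iota> \<mu> \<nu> \<or> lexl \<iota> \<nu> \<mu>"
proof -
  define D where "D = {k. \<mu> k \<noteq> \<nu> k}"
  have "D \<noteq> {}" using ne unfolding D_def by auto
  have fin: "finite (\<iota> ` D)" by simp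
  obtain k where kD: "k \<in> D" and kmin: "\<iota> k = Min (\<iota> ` D)"
  proof -
    have "Min (\<iota> ` D) \<in> \<iota> ` D" using Min_in[OF fin] \<open>D \<noteq> {}\<close> by auto
    then show ?thesis using that by auto
  qed
  have "\<forall>k'. \<iota> k' < \<iota> k \<longrightarrow> \<mu> k' = \<nu> k'"
  proof (intro allI impI)
    fix k' assume "\<iota> k' < \<iota> k"
    show "\<mu> k' = \<nu> k'"
    proof (rule ccontr)
      assume "\<mu> k' \<noteq> \<nu> k'"
      then have "k' \<in> D" by (simp add: D_def)
      then have "\<iota> k \<le> \<iota> k'" using kmin fin by simp
      with \<open>\<iota> k' < \<iota> k\<close> show False by simp
    qed
  qed
  moreover have "\<mu> k \<noteq> \<nu> k" using kD by (simp add: D_def)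
  ultimately show ?thesis unfolding lexl_def
    by (metis less_linear)
qed

lemma lexl_add:
  fixes \<mu> \<nu> \<rho> :: "'a \<Rightarrow> int"
  assumes "lexl \<iota> \<mu> \<nu>" shows "lexl \<iota> (\<mu> + \<rho>) (\<nu> + \<rho>)" "lexl \<iota> (\<rho> + \<mu>) (\<rho> + \<nu>)"
proof -
  obtain k where k: "\<mu> k < \<nu> k" "\<forall>k'. \<iota> k' < \<iota> k \<longrightarrow> \<mu> k' = \<nu> k'"
    using assms unfolding lexl_def by blast
  show "lexl \<iota> (\<mu> + \<rho>) (\<nu> + \<rho>)" unfolding lexl_def plus_fun_def
    using k by (intro exI[of _ k]) simp
  show "lexl \<iota> (\<rho> + \<mu>) (\<rho> + \<nu>)" unfolding lexl_def plus_fun_def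
    using k by (intro exI[of _ k]) simp
qed

lemma lexl_max:
  assumes inj: "inj \<iota>" and "finite F" "F \<noteq> {}"
  shows "\<exists>m\<in>F. \<forall>a\<in>F. a = m \<or> lexl \<iota> a (m :: 'a::finite \<Rightarrow> int)"
  using assms(2,3)
proof (induction F rule: finite_ne_induct)
  case (singleton x) then show ?case by auto
next
  case (insert x F)
  obtain m where m: "m \<in> F" "\<forall>a\<in>F. a = m \<or> lexl \<iota> a m" using insert.IH by blast
  show ?case
  proof (cases "x = m \<or> lexl \<iota> x m")
    case True
    then have "\<forall>a\<in>insert x F. a = m \<or> lexl \<iota> a m" using m(2) by blast
    then show ?thesis using m(1) by blast
  next
    case False
    then have xm: "lexl \<iota> m x" using lexl_total[OF inj, of x m] by blast
    have "\<forall>a\<in>insert x F. a = x \<or> lexl \<iota> a x"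
    proof
      fix a assume "a \<in> insert x F"
      then consider "a = x" | "a = m" | "lexl \<iota> a m" using m(2) by blast
      then show "a = x \<or> lexl \<iota> a x"
      proof cases
        case 1 then show ?thesis by simp
      next
        case 2 then show ?thesis using xm by simp
      next
        case 3 then show ?thesis using lexl_trans[OF inj 3 xm] by simp
      qed
    qed
    then show ?thesis by blast
  qed
qed

lemma lexl_add_strict:
  fixes a b m n :: "'a::finite \<Rightarrow> int"
  assumes inj: "inj \<iota>" and "a = m \<or> lexl \<iota> a m" "b = n \<or> lexl \<iota> b n" "a + b = m + n"
  shows "a = m \<and> b = n"
proof (rule ccontr)
  assume H: "\<not> (a = m \<and> b = n)"
  have 1: "lexl \<iota> (a + b) (m + b)" if "lexl \<iota> a m" using lexl_add(1)[OF that] .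
  have 2: "lexl \<iota> (m + b) (m + n)" if "lexl \<iota> b n" using lexl_add(2)[OF that] .
  have "lexl \<iota> (a + b) (m + n)"
  proof (cases "a = m")
    case True
    then have "lexl \<iota> b n" using H assms(3) by auto
    then show ?thesis using 2 True by simp
  next
    case False
    then have am: "lexl \<iota> a m" using assms(2) by auto
    show ?thesis
    proof (cases "b = n")
      case True then show ?thesis using 1[OF am] by simp
    next
      case False
      then have "lexl \<iota> b n" using assms(3) by auto
      then show ?thesis using lexl_trans[OF inj 1[OF am] 2] by simp
    qed
  qed
  then have "lexl \<iota> (m + n) (m + n)" using assms(4) by simp
  then show False by (rule notE[OF lexl_irrefl])
qed

lemma laurent_no_zero_div:
  fixes f g :: "('a::finite \<Rightarrow> int) \<Rightarrow>\<^sub>0 'b::field"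
  assumes "f \<noteq> 0" "g \<noteq> 0"
  shows "f * g \<noteq> 0"
proof -
  obtain \<iota> :: "'a \<Rightarrow> nat" where inj: "inj \<iota>"
    using finite_imp_inj_to_nat_seg[of "UNIV :: 'a set"] by auto
  from assms show ?thesis
  proof transfer
    fix f g :: "('a \<Rightarrow> int) \<Rightarrow> 'b"
    define F where "F = {a. f a \<noteq> 0}"
    moreover define G where "G = {a. g a \<noteq> 0}"
    ultimately have FG:
      "\<And>a. f a \<noteq> 0 \<longleftrightarrow> a \<in> F"
      "\<And>b. g b \<noteq> 0 \<longleftrightarrow> b \<in> G"
      by simp_all
    assume finf: "finite {a. f a \<noteq> 0}"
    then have [simp]: "finite F"
      by (simp add: F_def)
    assume fing: "finite {a. g a \<noteq> 0}"
    then have [simp]: "finite G"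
      by (simp add: G_def)
    assume "f \<noteq> (\<lambda>a. 0)"
    then obtain a where "f a \<noteq> 0"
      by (auto simp: fun_eq_iff)
    assume "g \<noteq> (\<lambda>b. 0)"
    then obtain b where "g b \<noteq> 0"
      by (auto simp: fun_eq_iff)
    from \<open>f a \<noteq> 0\<close> and \<open>g b \<noteq> 0\<close> have "F \<noteq> {}" and "G \<noteq> {}"
      using FG by auto
    obtain mF where mF: "mF \<in> F" "\<And>a. a \<in> F \<Longrightarrow> a = mF \<or> lexl \<iota> a mF"
      using lexl_max[OF inj \<open>finite F\<close> \<open>F \<noteq> {}\<close>] by auto
    obtain mG where mG: "mG \<in> G" "\<And>a. a \<in> G \<Longrightarrow> a = mG \<or> lexl \<iota> a mG"
      using lexl_max[OF inj \<open>finite G\<close> \<open>G \<noteq> {}\<close>] by auto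
    define q where "q = mF + mG"
    have "(\<Sum>(a, b). f a * g b when q = a + b) =
      (\<Sum>(a, b). f a * g b when q = a + b when a \<in> F \<and> b \<in> G)"
    proof (rule Sum_any.cong)
      fix ab :: "('a \<Rightarrow> int) \<times> ('a \<Rightarrow> int)"
      obtain a b where [simp]: "ab = (a, b)"
        by (cases ab) simp_all
      show "(case ab of (a, b) \<Rightarrow> f a * g b when q = a + b) =
         (case ab of (a, b) \<Rightarrow> f a * g b when q = a + b when a \<in> F \<and> b \<in> G)"
        by (cases "a \<in> F \<and> b \<in> G") (auto simp: when_def FG[symmetric])
    qed
    also have "\<dots> =
      (\<Sum>(a, b). f a * g b when (mF, mG) = (a, b))"
    proof (rule Sum_any.cong)
      fix ab :: "('a \<Rightarrow> int) \<times> ('a \<Rightarrow> int)"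
      obtain a b where [simp]: "ab = (a, b)"
        by (cases ab) simp_all
      have *: "a \<in> F \<Longrightarrow> b \<in> G \<Longrightarrow> q = a + b \<Longrightarrow> a = mF \<and> b = mG"
      proof -
        assume "a \<in> F" "b \<in> G" "q = a + b"
        then show "a = mF \<and> b = mG"
          using lexl_add_strict[OF inj, of a mF b mG, OF mF(2) mG(2)] unfolding q_def by simp
      qed
      show "(case ab of (a, b) \<Rightarrow> f a * g b when q = a + b when a \<in> F \<and> b \<in> G) =
         (case ab of (a, b) \<Rightarrow> f a * g b when (mF, mG) = (a, b))"
      proof (cases "a \<in> F \<and> b \<in> G \<and> q = a + b")
        case True
        then have "a = mF" "b = mG" using * by auto
        then show ?thesis using True by simp
      next
        case False
        have "(mF, mG) \<noteq> (a, b) \<or> f a * g b = 0"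
        proof (cases "(mF, mG) = (a, b)")
          case True
          then show ?thesis using False mF(1) mG(1) by (auto simp: q_def)
        qed simp
        then show ?thesis using False by (auto simp: when_def)
      qed
    qed
    also have "\<dots> = (\<Sum>ab. (case ab of (a, b) \<Rightarrow> f a * g b) when
      (mF, mG) = ab)"
      unfolding split_def when_def by auto
    also have "\<dots> \<noteq> 0"
      using mF(1) mG(1) FG by simp
    finally have "prod_fun f g q \<noteq> 0"
      by (simp add: prod_fun_unfold_prod[OF finf fing])
    then show "prod_fun f g \<noteq> (\<lambda>k. 0)"
      by (auto simp: fun_eq_iff)
  qed
qed


lemma monom_mult: "(monom a :: ('v, 'k::field) laurent) * monom b = monom (a + b)"
  by (simp add: monom_def mult_single)

lemma monom_zero: "(monom 0 :: ('v, 'k::field) laurent) = 1"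
  by (simp add: monom_def)

lemma keys_monom: "Poly_Mapping.keys (monom a :: ('v, 'k::field) laurent) = {a}"
  by (simp add: monom_def)

lemma monom_nz: "(monom a :: ('v, 'k::field) laurent) \<noteq> 0"
proof
  assume "(monom a :: ('v, 'k::field) laurent) = 0"
  then have "Poly_Mapping.keys (monom a :: ('v, 'k::field) laurent) = {}" by simp
  then show False by (simp add: keys_monom)
qed

lemma monom_inv: "(monom a :: ('v, 'k::field) laurent) * monom (- a) = 1"
  by (simp add: monom_mult monom_zero)

lemma laurent_cancel:
  fixes a b q :: "('v::finite, 'k::field) laurent"
  assumes "a * q = b * q" "q \<noteq> 0"
  shows "a = b"
proof -
  have "(a - b) * q = 0" using assms(1) by (simp add: algebra_simps)
  then have "a - b = 0" using laurent_no_zero_div[of "a - b" q] assms(2) by blast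
  then show ?thesis by simp
qed

lemma laurent_mult_nz:
  fixes a b :: "('v::finite, 'k::field) laurent"
  assumes "a \<noteq> 0" "b \<noteq> 0" shows "a * b \<noteq> 0"
  using laurent_no_zero_div[OF assms] .

lemma keys_mult_monom:
  fixes s :: "('v::finite, 'k::field) laurent"
  assumes "\<mu> \<in> Poly_Mapping.keys s"
  shows "\<mu> + \<nu> \<in> Poly_Mapping.keys (s * monom \<nu>)"
proof -
  have "s = (s * monom \<nu>) * monom (- \<nu>)" by (simp add: mult.assoc monom_inv)
  then have "\<mu> \<in> Poly_Mapping.keys ((s * monom \<nu>) * monom (- \<nu>))" using assms by simp
  then obtain a b where ab: "\<mu> = a + b" "a \<in> Poly_Mapping.keys (s * monom \<nu>)" "b \<in> Poly_Mapping.keys (monom (- \<nu>) :: ('v, 'k) laurent)"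
    using keys_mult by blast
  then have "b = - \<nu>" by (simp add: keys_monom)
  then have "a = \<mu> + \<nu>" using ab(1) by (simp add: algebra_simps)
  then show ?thesis using ab(2) by simp
qed

section \<open>Constraints\<close>

datatype 'v cs = Vx 'v | Kq "'v set" | Cy "'v set"

definition validc :: "('v \<Rightarrow> 'v \<Rightarrow> bool) \<Rightarrow> 'v cs \<Rightarrow> bool" where
  "validc E c = (case c of Vx z \<Rightarrow> True | Kq K \<Rightarrow> is_maximal_clique E K
      | Cy C \<Rightarrow> is_chordless_odd_cycle_ge5 E C)"

definition kk :: "'v set \<Rightarrow> int" where "kk C = int ((card C - 1) div 2)"

fun sig :: "'v cs \<Rightarrow> ('v option \<Rightarrow> int) \<Rightarrow> int" where
  "sig (Vx z) \<mu> = \<mu> (Some z)"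
| "sig (Kq K) \<mu> = \<mu> None - (\<Sum>x\<in>K. \<mu> (Some x))"
| "sig (Cy C) \<mu> = \<mu> None * kk C - (\<Sum>x\<in>C. \<mu> (Some x))"

lemma sig_lin: "sig c (\<lambda>w. a * \<mu> w + t * \<nu> w) = a * sig c \<mu> + t * sig c \<nu>"
  by (cases c) (simp_all add: sum.distrib sum_distrib_left algebra_simps)

lemma sig_add: "sig c (\<mu> + \<nu>) = sig c \<mu> + sig c \<nu>"
  using sig_lin[of c 1 \<mu> 1 \<nu>] by (simp add: plus_fun_def)

lemma sig_zero: "sig c 0 = 0"
  by (cases c) simp_all

lemma sig_uminus: "sig c (- \<mu>) = - sig c \<mu>"
  using sig_lin[of c "-1" \<mu> 0 \<mu>] by (simp add: fun_Compl_def)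

lemma finite_cs: "finite (UNIV :: ('v::finite) cs set)"
proof -
  have "UNIV = range Vx \<union> range Kq \<union> range (Cy :: 'v set \<Rightarrow> 'v cs)"
  proof (intro set_eqI iffI)
    fix x :: "'v cs"
    show "x \<in> range Vx \<union> range Kq \<union> range Cy" by (cases x) simp_all
  qed simp
  moreover have "finite (range Vx \<union> range Kq \<union> range (Cy :: 'v set \<Rightarrow> 'v cs))"
    by (intro finite_UnI finite_imageI) simp_all
  ultimately show ?thesis by simp
qed

definition Dlat :: "('v \<Rightarrow> 'v \<Rightarrow> bool) \<Rightarrow> int \<Rightarrow> ('v option \<Rightarrow> int) set" where
  "Dlat E a = {\<mu>. \<forall>c. validc E c \<longrightarrow> sig c \<mu> \<ge> a}"

definition DD :: "('v \<Rightarrow> 'v \<Rightarrow> bool) \<Rightarrow> int \<Rightarrow> ('v, 'k::field) laurent set" where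
  "DD E a = {p. Poly_Mapping.keys p \<subseteq> Dlat E a}"

lemma Dlat_add: "\<mu> \<in> Dlat E a \<Longrightarrow> \<nu> \<in> Dlat E b \<Longrightarrow> \<mu> + \<nu> \<in> Dlat E (a + b)"
  unfolding Dlat_def by (simp add: sig_add add_mono)

lemma zero_Dlat: "0 \<in> Dlat E 0"
  unfolding Dlat_def by (simp add: sig_zero)

lemma DD_zero: "0 \<in> DD E a"
  unfolding DD_def by simp

lemma DD_add: "p \<in> DD E a \<Longrightarrow> q \<in> DD E a \<Longrightarrow> p + q \<in> DD E a"
  unfolding DD_def mem_Collect_eq using keys_add[of p q] by (meson Un_least subset_trans)

lemma DD_mult:
  assumes "p \<in> DD E a" "q \<in> DD E b" shows "p * q \<in> DD E (a + b)"
proof -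
  have "Poly_Mapping.keys (p * q) \<subseteq> Dlat E (a + b)"
  proof
    fix k assume "k \<in> Poly_Mapping.keys (p * q)"
    then obtain u v where "k = u + v" "u \<in> Poly_Mapping.keys p" "v \<in> Poly_Mapping.keys q" using keys_mult by blast
    then show "k \<in> Dlat E (a + b)" using assms Dlat_add[of u E a v b] unfolding DD_def by auto
  qed
  then show ?thesis unfolding DD_def by simp
qed

lemma monom_DD: "(monom \<mu> :: ('v, 'k::field) laurent) \<in> DD E a \<longleftrightarrow> \<mu> \<in> Dlat E a"
  unfolding DD_def by (simp add: keys_monom)

lemma single0_DD: "(Poly_Mapping.single 0 c :: ('v, 'k::field) laurent) \<in> DD E 0"
  unfolding DD_def using zero_Dlat[of E] by simp

lemma sum_bound:
  fixes h :: "'c \<Rightarrow> int"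
  assumes "finite S" "c \<in> S"
  shows "\<bar>h c\<bar> \<le> (\<Sum>c\<in>S. \<bar>h c\<bar>)"
  using member_le_sum[of c S "\<lambda>c. \<bar>h c\<bar>"] assms by simp

lemma lift_Dlat:
  fixes \<mu> :: "'v::finite option \<Rightarrow> int"
  assumes P: "\<forall>c. validc E c \<longrightarrow> sig c \<rho> \<ge> 1"
  shows "\<exists>\<beta>. \<beta> \<in> Dlat E 0 \<and> \<mu> + \<beta> \<in> Dlat E 0"
proof -
  define t where "t = (\<Sum>c\<in>(UNIV :: 'v cs set). \<bar>sig c \<mu>\<bar>)"
  have t: "\<bar>sig c \<mu>\<bar> \<le> t" for c
    unfolding t_def by (rule sum_bound[OF finite_cs]) simp
  have t0: "t \<ge> 0" unfolding t_def by (simp add: sum_nonneg)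
  define \<beta> where "\<beta> = (\<lambda>w. 0 * \<mu> w + t * \<rho> w)"
  have sb: "sig c \<beta> = t * sig c \<rho>" for c unfolding \<beta>_def sig_lin by simp
  have "\<beta> \<in> Dlat E 0"
    unfolding Dlat_def using sb P t0 by (smt (verit) mem_Collect_eq mult_nonneg_nonneg)
  moreover have "\<mu> + \<beta> \<in> Dlat E 0"
    unfolding Dlat_def
  proof (intro CollectI allI impI)
    fix c assume "validc E c"
    then have "sig c \<rho> \<ge> 1" using P by simp
    then have "t * sig c \<rho> \<ge> t" using t0
      by (metis mult.commute mult_left_mono mult_1)
    then show "0 \<le> sig c (\<mu> + \<beta>)" using t[of c] by (simp add: sig_add sb)
  qed
  ultimately show ?thesis by blast
qed


section \<open>Fractions\<close>

definition FF :: "('v::finite \<Rightarrow> 'v \<Rightarrow> bool) \<Rightarrow> int \<Rightarrow> ('v, 'k::field) frac set" where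
  "FF E a = {x \<in> QF (ehrhart_ring E). \<exists>s \<in> DD E a. fst x = s * snd x}"

lemma validc_Vx: "validc E (Vx z)"
  by (simp add: validc_def)

context
  fixes E :: "'v::finite \<Rightarrow> 'v \<Rightarrow> bool" and \<rho> :: "'v option \<Rightarrow> int"
  assumes hR: "(ehrhart_ring E :: ('v, 'k::field) laurent set) = DD E 0"
  and W: "\<And>c a. validc E c \<Longrightarrow> \<exists>\<nu>. sig c \<nu> = a \<and> \<nu> \<in> Dlat E a"
  and P: "\<forall>c. validc E c \<longrightarrow> sig c \<rho> \<ge> 1"
begin

lemma colon_FF:
  fixes S :: "('v, 'k) frac set"
  assumes S1: "\<forall>y\<in>S. \<exists>t\<in>DD E a. fst y = t * snd y"
  and S2: "\<forall>c. validc E c \<longrightarrow> (\<exists>\<nu> y. y \<in> S \<and> snd y \<noteq> 0 \<and> fst y = monom \<nu> * snd y \<and> sig c \<nu> = a)"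
  shows "colon (ehrhart_ring E) S = (FF E (-a) :: ('v, 'k) frac set)"
proof (intro set_eqI iffI)
  fix x :: "('v, 'k) frac"
  assume x: "x \<in> colon (ehrhart_ring E) S"
  then have xQ: "x \<in> QF (ehrhart_ring E)" and xy: "\<forall>y\<in>S. frac_in (fmul x y) (ehrhart_ring E)"
    by (simp_all add: colon_def)
  obtain p q where pq: "x = (p, q)" by (cases x)
  have q0: "q \<noteq> 0" using xQ pq by (simp add: QF_def)
  have key: "\<exists>\<nu> r. r \<in> ehrhart_ring E \<and> p * monom \<nu> = r * q \<and> sig c \<nu> = a" if c: "validc E c" for c
  proof -
    have "\<exists>\<nu> y. y \<in> S \<and> snd y \<noteq> 0 \<and> fst y = monom \<nu> * snd y \<and> sig c \<nu> = a"
      using S2 c by simp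
    then obtain \<nu> y where y: "y \<in> S" "snd y \<noteq> 0" "fst y = monom \<nu> * snd y" "sig c \<nu> = a"
      by (elim exE conjE)
    from xy y(1) have "frac_in (fmul x y) (ehrhart_ring E)" by blast
    then obtain r where r: "r \<in> ehrhart_ring E" "p * fst y = r * (q * snd y)"
      by (auto simp: frac_in_def fmul_def pq)
    then have "(p * monom \<nu>) * snd y = (r * q) * snd y" using y(3) by (simp add: ac_simps)
    then have "p * monom \<nu> = r * q" using laurent_cancel y(2) by blast
    then show ?thesis using r(1) y(4) by blast
  qed
  obtain \<nu>0 r0 where r0: "r0 \<in> ehrhart_ring E" "p * monom \<nu>0 = r0 * q"
    using key[OF validc_Vx[of E undefined]] by (elim exE conjE)
  define s where "s = r0 * monom (- \<nu>0)"
  have ps: "p = s * q"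
  proof -
    have "p = p * monom \<nu>0 * monom (- \<nu>0)" by (simp add: mult.assoc monom_inv)
    also have "\<dots> = s * q" using r0(2) by (simp add: s_def ac_simps)
    finally show ?thesis .
  qed
  have "\<forall>\<mu>\<in>Poly_Mapping.keys s. \<forall>c. validc E c \<longrightarrow> sig c \<mu> \<ge> -a"
  proof (intro ballI allI impI)
    fix \<mu> c assume \<mu>: "\<mu> \<in> Poly_Mapping.keys s" and c: "validc E c"
    obtain \<nu> r where nr: "r \<in> ehrhart_ring E" "p * monom \<nu> = r * q" "sig c \<nu> = a"
      using key[OF c] by (elim exE conjE)
    have "(s * monom \<nu>) * q = r * q" using ps nr(2) by (simp add: ac_simps)
    then have "s * monom \<nu> = r" using laurent_cancel q0 by blast
    moreover have "\<mu> + \<nu> \<in> Poly_Mapping.keys (s * monom \<nu>)" by (rule keys_mult_monom[OF \<mu>])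
    ultimately have "\<mu> + \<nu> \<in> Poly_Mapping.keys r" by (simp only:)
    then have "\<mu> + \<nu> \<in> Dlat E 0" using nr(1) hR by (auto simp: DD_def)
    then have "sig c (\<mu> + \<nu>) \<ge> 0" using c by (simp add: Dlat_def)
    then show "sig c \<mu> \<ge> -a" using nr(3) by (simp add: sig_add)
  qed
  then have "s \<in> DD E (-a)" unfolding DD_def Dlat_def by blast
  then show "x \<in> FF E (-a)" using xQ ps pq unfolding FF_def by auto
next
  fix x :: "('v, 'k) frac"
  assume "x \<in> FF E (-a)"
  then obtain s where x: "x \<in> QF (ehrhart_ring E)" "s \<in> DD E (-a)" "fst x = s * snd x"
    unfolding FF_def by blast
  have "frac_in (fmul x y) (ehrhart_ring E)" if yS: "y \<in> S" for y
  proof -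
    have "\<exists>t\<in>DD E a. fst y = t * snd y" using S1 yS by simp
    then obtain t where t: "t \<in> DD E a" "fst y = t * snd y" by (elim bexE)
    have "s * t \<in> DD E 0" using DD_mult[OF x(2) t(1)] by simp
    moreover have "fst (fmul x y) = (s * t) * snd (fmul x y)"
      using x(3) t(2) by (simp add: fmul_def ac_simps)
    ultimately show ?thesis using hR unfolding frac_in_def by blast
  qed
  then show "x \<in> colon (ehrhart_ring E) S" using x(1) by (simp add: colon_def)
qed

lemma monom_rep:
  assumes "\<nu> \<in> Dlat E a"
  shows "\<exists>y. y \<in> (FF E a :: ('v, 'k) frac set) \<and> snd y \<noteq> 0 \<and> fst y = monom \<nu> * snd y"
proof -
  obtain \<beta> where \<beta>: "\<beta> \<in> Dlat E 0" "\<nu> + \<beta> \<in> Dlat E 0" using lift_Dlat[OF P] by blast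
  define y :: "('v, 'k) frac" where "y = (monom (\<nu> + \<beta>), monom \<beta>)"
  have "(monom (\<nu> + \<beta>) :: ('v, 'k) laurent) \<in> ehrhart_ring E" using \<beta>(2) hR monom_DD by blast
  moreover have "(monom \<beta> :: ('v, 'k) laurent) \<in> ehrhart_ring E" using \<beta>(1) hR monom_DD by blast
  moreover have "(monom \<beta> :: ('v, 'k) laurent) \<noteq> 0" by (rule monom_nz)
  ultimately have "y \<in> QF (ehrhart_ring E)" unfolding y_def QF_def by blast
  moreover have "fst y = monom \<nu> * snd y" by (simp add: y_def monom_mult)
  moreover have "(monom \<nu> :: ('v, 'k) laurent) \<in> DD E a" using assms monom_DD by blast
  ultimately have yF: "y \<in> FF E a" unfolding FF_def by (intro CollectI conjI bexI)
  have "snd y \<noteq> 0" by (simp add: y_def monom_nz)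
  with yF \<open>fst y = monom \<nu> * snd y\<close> show ?thesis by (intro exI[of _ y] conjI)
qed

lemma FF_S1: "\<forall>y\<in>(FF E a :: ('v, 'k) frac set). \<exists>t\<in>DD E a. fst y = t * snd y"
  unfolding FF_def by blast

lemma FF_S2:
  "\<forall>c. validc E c \<longrightarrow> (\<exists>\<nu> y. y \<in> (FF E a :: ('v, 'k) frac set) \<and> snd y \<noteq> 0 \<and> fst y = monom \<nu> * snd y \<and> sig c \<nu> = a)"
proof (intro allI impI)
  fix c assume "validc E c"
  then obtain \<nu> where \<nu>: "sig c \<nu> = a" "\<nu> \<in> Dlat E a" using W by blast
  then show "\<exists>\<nu> y. y \<in> (FF E a :: ('v, 'k) frac set) \<and> snd y \<noteq> 0 \<and> fst y = monom \<nu> * snd y \<and> sig c \<nu> = a"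
  proof -
    obtain y where "y \<in> (FF E a :: ('v, 'k) frac set)" "snd y \<noteq> 0" "fst y = monom \<nu> * snd y"
      using monom_rep[OF \<nu>(2)] by (elim exE conjE)
    with \<nu>(1) show ?thesis by (intro exI conjI)
  qed
qed

lemma colon_FF_FF: "colon (ehrhart_ring E) (FF E a :: ('v, 'k) frac set) = FF E (-a)"
  by (rule colon_FF[OF FF_S1 FF_S2])

lemma SP_S1:
  assumes "z \<in> sums_of_products (FF E a :: ('v, 'k) frac set) (FF E b)"
  shows "\<exists>t\<in>DD E (a + b). fst z = t * snd z"
  using assms
proof induction
  case zero
  then show ?case using DD_zero by fastforce
next
  case (step s x y)
  obtain t0 where t0: "t0 \<in> DD E (a + b)" "fst s = t0 * snd s" using step.IH by blast
  obtain sx where sx: "sx \<in> DD E a" "fst x = sx * snd x" using step.hyps(2) unfolding FF_def by blast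
  obtain sy where sy: "sy \<in> DD E b" "fst y = sy * snd y" using step.hyps(3) unfolding FF_def by blast
  have "t0 + sx * sy \<in> DD E (a + b)" using DD_add[OF t0(1) DD_mult[OF sx(1) sy(1)]] .
  moreover have "fst (fadd s (fmul x y)) = (t0 + sx * sy) * snd (fadd s (fmul x y))"
    using t0(2) sx(2) sy(2) by (simp add: fadd_def fmul_def algebra_simps)
  ultimately show ?case by blast
qed

lemma SP_S2:
  "\<forall>c. validc E c \<longrightarrow> (\<exists>\<nu> z. z \<in> sums_of_products (FF E a :: ('v, 'k) frac set) (FF E b) \<and> snd z \<noteq> 0
      \<and> fst z = monom \<nu> * snd z \<and> sig c \<nu> = a + b)"
proof (intro allI impI)
  fix c assume c: "validc E c"
  obtain \<nu>1 y1 where y1: "y1 \<in> (FF E a :: ('v, 'k) frac set)" "snd y1 \<noteq> 0" "fst y1 = monom \<nu>1 * snd y1" "sig c \<nu>1 = a"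
    using FF_S2 c by blast
  obtain \<nu>2 y2 where y2: "y2 \<in> (FF E b :: ('v, 'k) frac set)" "snd y2 \<noteq> 0" "fst y2 = monom \<nu>2 * snd y2" "sig c \<nu>2 = b"
    using FF_S2 c by blast
  define z where "z = fadd (0, 1) (fmul y1 y2)"
  have "z \<in> sums_of_products (FF E a :: ('v, 'k) frac set) (FF E b)"
    unfolding z_def by (rule sums_of_products.step[OF sums_of_products.zero y1(1) y2(1)])
  moreover have "snd z \<noteq> 0" unfolding z_def fadd_def fmul_def using laurent_mult_nz[OF y1(2) y2(2)] by simp
  moreover have "fst z = monom (\<nu>1 + \<nu>2) * snd z"
    unfolding z_def fadd_def fmul_def using y1(3) y2(3) by (simp add: monom_mult[symmetric] ac_simps)
  moreover have "sig c (\<nu>1 + \<nu>2) = a + b" using y1(4) y2(4) by (simp add: sig_add)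
  ultimately show "\<exists>\<nu> z. z \<in> sums_of_products (FF E a :: ('v, 'k) frac set) (FF E b) \<and> snd z \<noteq> 0
      \<and> fst z = monom \<nu> * snd z \<and> sig c \<nu> = a + b" by blast
qed

lemma dmul_FF: "dmul (ehrhart_ring E) (FF E a :: ('v, 'k) frac set) (FF E b) = FF E (a + b)"
proof -
  have "colon (ehrhart_ring E) (sums_of_products (FF E a :: ('v, 'k) frac set) (FF E b)) = FF E (- (a + b))"
    by (rule colon_FF) (use SP_S1 SP_S2 in blast)+
  then show ?thesis unfolding dmul_def using colon_FF_FF[of "- (a + b)"] by (simp add: ac_simps)
qed

lemma asfrac_R: "as_frac (ehrhart_ring E) (ehrhart_ring E) = (FF E 0 :: ('v, 'k) frac set)"
  unfolding as_frac_def FF_def frac_in_def using hR by auto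

lemma dpow_FF:
  "dpow (ehrhart_ring E) (FF E 1 :: ('v, 'k) frac set) n = FF E n"
proof (cases "n \<ge> 0")
  case True
  have "(dmul (ehrhart_ring E) (FF E 1 :: ('v, 'k) frac set) ^^ k) (as_frac (ehrhart_ring E) (ehrhart_ring E)) = FF E (int k)" for k
  proof (induction k)
    case 0 then show ?case using asfrac_R by simp
  next
    case (Suc k) then show ?case using dmul_FF[of 1 "int k"] by (simp add: add.commute)
  qed
  then show ?thesis using True unfolding dpow_def by simp
next
  case False
  have "(dmul (ehrhart_ring E) (FF E (-1) :: ('v, 'k) frac set) ^^ k) (as_frac (ehrhart_ring E) (ehrhart_ring E)) = FF E (- int k)" for k
  proof (induction k)
    case 0 then show ?case using asfrac_R by simp
  next
    case (Suc k) then show ?case using dmul_FF[of "-1" "- int k"] by (simp add: add.commute)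
  qed
  then show ?thesis using False colon_FF_FF[of 1] unfolding dpow_def by simp
qed

lemma mem_frac_FF:
  "mem_frac (monom \<mu> :: ('v, 'k) laurent) (FF E n) \<longleftrightarrow> \<mu> \<in> Dlat E n"
proof
  assume "mem_frac (monom \<mu> :: ('v, 'k) laurent) (FF E n)"
  then obtain x where x: "x \<in> (FF E n :: ('v, 'k) frac set)" "fst x = monom \<mu> * snd x"
    unfolding mem_frac_def by blast
  then obtain s where s: "s \<in> DD E n" "fst x = s * snd x" "snd x \<noteq> 0"
    unfolding FF_def QF_def by auto
  then have "monom \<mu> = s" using x(2) laurent_cancel by metis
  then show "\<mu> \<in> Dlat E n" using s(1) monom_DD by blast
next
  assume A: "\<mu> \<in> Dlat E n"
  obtain y where "y \<in> (FF E n :: ('v, 'k) frac set)" "snd y \<noteq> 0" "fst y = monom \<mu> * snd y"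
    using monom_rep[OF A] by (elim exE conjE)
  then show "mem_frac (monom \<mu> :: ('v, 'k) laurent) (FF E n)"
    unfolding mem_frac_def by (intro bexI)
qed

end

lemma sg_sym: "simple_graph E \<Longrightarrow> E x y \<Longrightarrow> E y x"
  by (simp add: simple_graph_def)

lemma sg_irr: "simple_graph E \<Longrightarrow> \<not> E x x"
  by (simp add: simple_graph_def)

lemma suc_mod: "i < n \<Longrightarrow> Suc i mod n = (if Suc i = n then 0 else Suc i)"
  by (cases "Suc i = n") simp_all

lemma clique_in_maximal:
  fixes E :: "'v::finite \<Rightarrow> 'v \<Rightarrow> bool"
  assumes "is_clique E K0"
  shows "\<exists>K. is_maximal_clique E K \<and> K0 \<subseteq> K"
proof -
  define P where "P = (\<lambda>K. is_clique E K \<and> K0 \<subseteq> K)"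
  have "P K0" using assms by (simp add: P_def)
  moreover have "\<forall>K. P K \<longrightarrow> card K < Suc (card (UNIV :: 'v set))"
    by (simp add: card_mono le_imp_less_Suc)
  ultimately obtain K where K: "P K" "\<And>K'. P K' \<Longrightarrow> card K' \<le> card K"
    using ex_has_greatest_nat[of P K0 card "Suc (card (UNIV :: 'v set))"] by blast
  have "is_maximal_clique E K"
    unfolding is_maximal_clique_def
  proof (intro conjI allI impI)
    show "is_clique E K" using K(1) by (simp add: P_def)
  next
    fix K' assume H: "is_clique E K' \<and> K \<subseteq> K'"
    then have "P K'" using K(1) by (auto simp: P_def)
    then have "card K' \<le> card K" by (rule K(2))
    moreover have "finite K'" by simp
    ultimately show "K' = K" using H card_seteq[of K' K] by simp
  qed
  then show ?thesis using K(1) by (auto simp: P_def)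
qed

lemma maximal_clique_nonempty:
  assumes "is_maximal_clique E K" shows "K \<noteq> {}"
proof
  assume "K = {}"
  have "is_clique E {undefined}" by (simp add: is_clique_def)
  then have "{undefined} = K" using assms \<open>K = {}\<close> unfolding is_maximal_clique_def by blast
  then show False using \<open>K = {}\<close> by simp
qed

lemma edge_clique:
  assumes "simple_graph E" "E x y" shows "is_clique E {x, y}"
  using assms unfolding is_clique_def simple_graph_def by auto

lemma three_elems:
  assumes "2 < card A"
  shows "\<exists>a b c. a \<in> A \<and> b \<in> A \<and> c \<in> A \<and> a \<noteq> b \<and> a \<noteq> c \<and> b \<noteq> c"
proof -
  have fin: "finite A" using assms card.infinite by fastforce
  obtain a where a: "a \<in> A" using assms by fastforce
  have "card (A - {a}) > 1" using assms a fin by (simp add: card_Diff_singleton)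
  then have "A - {a} \<noteq> {}" by (metis card.empty not_one_less_zero)
  then obtain b where b: "b \<in> A - {a}" by blast
  have "card (A - {a} - {b}) > 0" using \<open>card (A - {a}) > 1\<close> b fin by (simp add: card_Diff_singleton)
  then have "A - {a} - {b} \<noteq> {}" by (metis card.empty less_irrefl)
  then obtain c where c: "c \<in> A - {a} - {b}" by blast
  show ?thesis using a b c by blast
qed

lemma three_adj_false:
  fixes i j l n :: nat
  assumes "i < n" "j < n" "l < n" "i \<noteq> j" "i \<noteq> l" "j \<noteq> l" "4 \<le> n"
  and "j = Suc i mod n \<or> i = Suc j mod n"
  and "l = Suc i mod n \<or> i = Suc l mod n"
  and "l = Suc j mod n \<or> j = Suc l mod n"
  shows False
  using assms by (simp add: suc_mod split: if_splits) linarith+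

lemma clique_cycle_inter:
  assumes sg: "simple_graph E" and cl: "is_clique E K" and cy: "is_cycle E xs"
  and ch: "chordless E xs" and len: "length xs \<ge> 4"
  shows "card (K \<inter> set xs) \<le> 2"
proof (rule ccontr)
  assume "\<not> card (K \<inter> set xs) \<le> 2"
  then obtain a b c where abc: "a \<in> K \<inter> set xs" "b \<in> K \<inter> set xs" "c \<in> K \<inter> set xs"
    "a \<noteq> b" "a \<noteq> c" "b \<noteq> c"
    using three_elems[of "K \<inter> set xs"] by auto
  obtain i where i: "i < length xs" "xs ! i = a" using abc(1) by (auto simp: in_set_conv_nth)
  obtain j where j: "j < length xs" "xs ! j = b" using abc(2) by (auto simp: in_set_conv_nth)
  obtain l where l: "l < length xs" "xs ! l = c" using abc(3) by (auto simp: in_set_conv_nth)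
  have "E a b" "E a c" "E b c" using cl abc unfolding is_clique_def by auto
  then have "j = Suc i mod length xs \<or> i = Suc j mod length xs"
    "l = Suc i mod length xs \<or> i = Suc l mod length xs"
    "l = Suc j mod length xs \<or> j = Suc l mod length xs"
    using ch i j l unfolding chordless_def by auto
  moreover have "i \<noteq> j" "i \<noteq> l" "j \<noteq> l" using i j l abc by auto
  ultimately show False using three_adj_false[of i "length xs" j l] i j l len by blast
qed

lemma cycle_subset_chordless:
  assumes sg: "simple_graph E" and cyx: "is_cycle E xs" and ch: "chordless E xs"
  and cyy: "is_cycle E ys" and sub: "set ys \<subseteq> set xs"
  shows "set ys = set xs"
proof -
  define n where "n = length xs"
  define m where "m = length ys"
  have m3: "m \<ge> 3" and n3: "n \<ge> 3" using cyx cyy by (auto simp: is_cycle_def m_def n_def)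
  have dy: "distinct ys" using cyy by (simp add: is_cycle_def)
  have dx: "distinct xs" using cyx by (simp add: is_cycle_def)
  have closure: "xs ! (Suc i mod n) \<in> set ys" if xi: "xs ! i \<in> set ys" and iln: "i < n" for i
  proof -
    obtain j where j: "j < m" "ys ! j = xs ! i" using xi by (auto simp: in_set_conv_nth m_def)
    define js where "js = Suc j mod m"
    define jp where "jp = (if j = 0 then m - 1 else j - 1)"
    have js: "js < m" using m3 by (simp add: js_def)
    have jp: "jp < m" unfolding jp_def using j m3 by (cases "j = 0") auto
    have jpj: "Suc jp mod m = j" using j m3 by (auto simp: jp_def)
    have "js \<noteq> jp" using j m3 by (auto simp: js_def jp_def suc_mod split: if_splits)
    then have u12: "ys ! js \<noteq> ys ! jp" using dy js jp by (simp add: m_def nth_eq_iff_index_eq)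
    have e1: "E (xs ! i) (ys ! js)" using cyy j unfolding is_cycle_def js_def m_def by auto
    have "E (ys ! jp) (ys ! j)" using cyy jp jpj unfolding is_cycle_def m_def by metis
    then have e2: "E (xs ! i) (ys ! jp)" using sg_sym[OF sg] j by simp
    have "ys ! js \<in> set xs" using sub js nth_mem[of js ys] by (auto simp: m_def)
    then obtain k1 where k1: "k1 < n" "xs ! k1 = ys ! js"
      by (auto simp: in_set_conv_nth n_def)
    have "ys ! jp \<in> set xs" using sub jp nth_mem[of jp ys] by (auto simp: m_def)
    then obtain k2 where k2: "k2 < n" "xs ! k2 = ys ! jp"
      by (auto simp: in_set_conv_nth n_def)
    have k12: "k1 \<noteq> k2" using u12 k1 k2 by auto
    have c1: "k1 = Suc i mod n \<or> i = Suc k1 mod n" using ch iln k1 e1 unfolding chordless_def n_def by auto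
    have c2: "k2 = Suc i mod n \<or> i = Suc k2 mod n" using ch iln k2 e2 unfolding chordless_def n_def by auto
    show ?thesis
    proof (cases "k1 = Suc i mod n")
      case True
      then show ?thesis using k1 js by (simp add: m_def)
    next
      case False
      show ?thesis
      proof (cases "k2 = Suc i mod n")
        case True
        then show ?thesis using k2 jp by (simp add: m_def)
      next
        case F2: False
        then have "Suc k1 mod n = Suc k2 mod n" using c1 c2 False by simp
        then have "k1 = k2" using k1(1) k2(1) by (simp add: suc_mod split: if_splits)
        then show ?thesis using k12 by simp
      qed
    qed
  qed
  have "0 < length ys" using m3 unfolding m_def by linarith
  then have "ys ! 0 \<in> set ys" by (rule nth_mem)
  then have "ys ! 0 \<in> set xs" using sub by blast
  then obtain i0 where i0: "i0 < n" "xs ! i0 = ys ! 0"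
    by (auto simp: in_set_conv_nth n_def)
  have "xs ! i0 \<in> set ys" using i0(2) \<open>ys ! 0 \<in> set ys\<close> by simp
  have all: "xs ! ((i0 + k) mod n) \<in> set ys" for k
  proof (induction k)
    case 0 then show ?case using i0 \<open>xs ! i0 \<in> set ys\<close> by simp
  next
    case (Suc k)
    have "(i0 + Suc k) mod n = Suc ((i0 + k) mod n) mod n" by (simp add: mod_Suc_eq)
    then show ?case using closure[OF Suc.IH] n3 by simp
  qed
  have "set xs \<subseteq> set ys"
  proof
    fix v assume "v \<in> set xs"
    then obtain i where i: "i < n" "xs ! i = v" by (auto simp: in_set_conv_nth n_def)
    have "(i0 + (i + n - i0)) mod n = i" using i i0 by simp
    then show "v \<in> set ys" using all[of "i + n - i0"] i by simp
  qed
  then show ?thesis using sub by blast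
qed


section \<open>Odd cycle reduction\<close>

lemma cycle_edge:
  assumes "is_cycle E ys" "Suc k < length ys"
  shows "E (ys ! k) (ys ! Suc k)"
proof -
  have k: "k < length ys" using assms(2) by linarith
  have "E (ys ! k) (ys ! (Suc k mod length ys))" using assms(1) k unfolding is_cycle_def by blast
  then show ?thesis using assms(2) by simp
qed

lemma cycle_edge_last:
  assumes "is_cycle E ys"
  shows "E (ys ! (length ys - 1)) (ys ! 0)"
proof -
  have l: "length ys \<ge> 3" using assms by (simp add: is_cycle_def)
  have k: "length ys - 1 < length ys" using l by linarith
  have "E (ys ! (length ys - 1)) (ys ! (Suc (length ys - 1) mod length ys))"
    using assms k unfolding is_cycle_def by blast
  moreover have "Suc (length ys - 1) = length ys" using l by linarith
  then have "Suc (length ys - 1) mod length ys = 0" by simp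
  ultimately show ?thesis by simp
qed

lemma path_pair_sum:
  fixes f :: "'v \<Rightarrow> real"
  assumes edge: "\<And>x y. E x y \<Longrightarrow> f x + f y \<le> 1"
  shows "(\<forall>k. Suc k < length zs \<longrightarrow> E (zs ! k) (zs ! Suc k)) \<Longrightarrow> even (length zs)
    \<Longrightarrow> sum_list (map f zs) \<le> real (length zs) / 2"
proof (induction zs rule: induct_list012)
  case 1 then show ?case by simp
next
  case (2 x) then show ?case by simp
next
  case (3 x y zs)
  have "E ((x # y # zs) ! 0) ((x # y # zs) ! Suc 0)" using spec[OF "3.prems"(1), of 0] by simp
  then have "E x y" by simp
  then have xy: "f x + f y \<le> 1" by (rule edge)
  have "\<forall>k. Suc k < length zs \<longrightarrow> E (zs ! k) (zs ! Suc k)"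
  proof (intro allI impI)
    fix k assume "Suc k < length zs"
    then have "Suc (Suc (Suc k)) < length (x # y # zs)" by simp
    then have "E ((x # y # zs) ! Suc (Suc k)) ((x # y # zs) ! Suc (Suc (Suc k)))"
      using spec[OF "3.prems"(1), of "Suc (Suc k)"] by (simp only: mp)
    then show "E (zs ! k) (zs ! Suc k)" by simp
  qed
  moreover have "even (length zs)" using "3.prems"(2) by simp
  ultimately have "sum_list (map f zs) \<le> real (length zs) / 2" using "3.IH"(1) by blast
  then show ?case using xy by simp
qed

lemma chord_split:
  fixes f :: "'v::finite \<Rightarrow> real"
  assumes sg: "simple_graph E" and cy: "is_cycle E ys" and n: "n = length ys" and odd: "odd n"
  and d2: "2 \<le> d" and dn: "d + 2 \<le> n" and ch: "E (ys ! 0) (ys ! d)"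
  and edge: "\<And>x y. E x y \<Longrightarrow> f x + f y \<le> 1"
  and IH: "\<And>zs. is_cycle E zs \<Longrightarrow> odd (length zs) \<Longrightarrow> length zs < n
             \<Longrightarrow> sum_list (map f zs) \<le> (real (length zs) - 1) / 2"
  shows "sum_list (map f ys) \<le> (real n - 1) / 2"
proof (cases "even d")
  case True
  define A where "A = take (Suc d) ys"
  have lA: "length A = Suc d" using dn n by (simp add: A_def)
  have dA: "distinct A" using cy by (simp add: A_def is_cycle_def)
  have "is_cycle E A"
    unfolding is_cycle_def
  proof (intro conjI allI impI)
    show "3 \<le> length A" using lA d2 by simp
    show "distinct A" by (rule dA)
  next
    fix k assume k: "k < length A"
    show "E (A ! k) (A ! (Suc k mod length A))"
    proof (cases "k < d")
      case True
      then have "Suc k mod length A = Suc k" using lA by simp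
      moreover have "E (ys ! k) (ys ! Suc k)" using cycle_edge[OF cy] True dn n by simp
      ultimately show ?thesis using True k lA by (simp add: A_def)
    next
      case False
      then have kd: "k = d" using k lA by simp
      then have "Suc k mod length A = 0" using lA by simp
      moreover have "E (ys ! d) (ys ! 0)" using sg_sym[OF sg ch] .
      ultimately show ?thesis using kd lA by (simp add: A_def)
    qed
  qed
  moreover have "odd (length A)" using lA True by simp
  moreover have "length A < n" using lA dn by simp
  ultimately have sA: "sum_list (map f A) \<le> (real (length A) - 1) / 2" using IH by blast
  define R where "R = drop (Suc d) ys"
  have lR: "length R = n - Suc d" using n by (simp add: R_def)
  have pR: "\<forall>k. Suc k < length R \<longrightarrow> E (R ! k) (R ! Suc k)"
  proof (intro allI impI)
    fix k assume k: "Suc k < length R"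
    then have "Suc (Suc d + k) < length ys" using lR n by simp
    then have "E (ys ! (Suc d + k)) (ys ! Suc (Suc d + k))" using cycle_edge[OF cy] by blast
    then show "E (R ! k) (R ! Suc k)" using k lR n dn by (simp add: R_def)
  qed
  have eR: "even (length R)" using lR odd True dn by simp
  have sR: "sum_list (map f R) \<le> real (length R) / 2" by (rule path_pair_sum[OF edge pR eR])
  have "ys = A @ R" by (simp add: A_def R_def)
  then have "map f ys = map f A @ map f R" by simp
  then have "sum_list (map f ys) = sum_list (map f A) + sum_list (map f R)" by simp
  also have "\<dots> \<le> (real (length A) - 1) / 2 + real (length R) / 2" using sA sR by linarith
  also have "\<dots> = (real n - 1) / 2" using lA lR dn by (simp add: of_nat_diff field_simps)
  finally show ?thesis .
next
  case False
  define B where "B = ys ! 0 # drop d ys"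
  have lB: "length B = n - d + 1" using n dn by (simp add: B_def)
  have dys: "distinct ys" using cy by (simp add: is_cycle_def)
  have "ys ! 0 \<notin> set (drop d ys)"
  proof
    assume "ys ! 0 \<in> set (drop d ys)"
    then obtain k where k: "k < length (drop d ys)" "drop d ys ! k = ys ! 0" by (auto simp: in_set_conv_nth)
    then have "ys ! (d + k) = ys ! 0" using dn n by simp
    moreover have "d + k < length ys" using k by simp
    moreover have "0 < length ys" using n dn by linarith
    ultimately have "d + k = 0" using nth_eq_iff_index_eq[OF dys, of "d + k" 0] by simp
    then show False using d2 by simp
  qed
  then have dB: "distinct B" using dys by (simp add: B_def)
  have Bnth: "B ! Suc k = ys ! (d + k)" if "d + k < n" for k using that n by (simp add: B_def)
  have "is_cycle E B"
    unfolding is_cycle_def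
  proof (intro conjI allI impI)
    show "3 \<le> length B" using lB dn by simp
    show "distinct B" by (rule dB)
  next
    fix k assume k: "k < length B"
    show "E (B ! k) (B ! (Suc k mod length B))"
    proof (cases k)
      case 0
      then have "Suc k mod length B = 1" using lB dn by simp
      moreover have "B ! 1 = ys ! d" using Bnth[of 0] dn by simp
      ultimately show ?thesis using 0 ch by (simp add: B_def)
    next
      case (Suc k')
      show ?thesis
      proof (cases "Suc k < length B")
        case True
        then have "Suc k mod length B = Suc k" by simp
        moreover have "d + Suc k' < n" using True Suc lB dn by simp
        moreover have "E (ys ! (d + k')) (ys ! Suc (d + k'))" using cycle_edge[OF cy] calculation(2) n by simp
        ultimately show ?thesis using Suc Bnth[of k'] Bnth[of "Suc k'"] by simp
      next
        case False
        then have kl: "Suc k = length B" using k by simp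
        then have "Suc k mod length B = 0" by simp
        moreover have "d + k' = n - 1" using kl Suc lB dn by simp
        moreover have "E (ys ! (n - 1)) (ys ! 0)" using cycle_edge_last[OF cy] n by simp
        ultimately show ?thesis using Suc Bnth[of k'] dn by (simp add: B_def)
      qed
    qed
  qed
  moreover have "odd (length B)" using lB False odd dn by simp
  moreover have "length B < n" using lB d2 dn by simp
  ultimately have sB: "sum_list (map f B) \<le> (real (length B) - 1) / 2" using IH by blast
  define M where "M = take (d - 1) (drop 1 ys)"
  have lM: "length M = d - 1" using n dn by (simp add: M_def)
  have pM: "\<forall>k. Suc k < length M \<longrightarrow> E (M ! k) (M ! Suc k)"
  proof (intro allI impI)
    fix k assume k: "Suc k < length M"
    then have "Suc (Suc k) < length ys" using lM n dn by simp
    then have "E (ys ! Suc k) (ys ! Suc (Suc k))" using cycle_edge[OF cy] by blast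
    then show "E (M ! k) (M ! Suc k)" using k lM n dn by (simp add: M_def)
  qed
  have eM: "even (length M)" using lM False d2 by simp
  have sM: "sum_list (map f M) \<le> real (length M) / 2" by (rule path_pair_sum[OF edge pM eM])
  have ys0: "ys = ys ! 0 # drop 1 ys" using n dn by (cases ys) simp_all
  have eq1: "drop 1 ys = M @ drop (d - 1) (drop 1 ys)" unfolding M_def by (rule append_take_drop_id[symmetric])
  have "d - 1 + 1 = d" using d2 by linarith
  then have e1: "drop (d - 1) (drop 1 ys) = drop d ys" by (metis drop_drop)
  have "drop 1 ys = M @ drop d ys" using eq1 e1 by metis
  then have "map f ys = f (ys ! 0) # map f M @ map f (drop d ys)" using ys0 by (metis list.simps(9) map_append)
  then have "sum_list (map f ys) = f (ys ! 0) + sum_list (map f M) + sum_list (map f (drop d ys))"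
    by simp
  also have "\<dots> = sum_list (map f B) + sum_list (map f M)" by (simp add: B_def)
  also have "\<dots> \<le> (real (length B) - 1) / 2 + real (length M) / 2" using sB sM by linarith
  also have "\<dots> = (real n - 1) / 2" using lB lM dn d2 by (simp add: of_nat_diff field_simps)
  finally show ?thesis .
qed


lemma modlem1:
  fixes i j n :: nat
  assumes "i < n" "j < n"
  shows "((j + n - i) mod n + i) mod n = j"
proof -
  have "((j + n - i) mod n + i) mod n = (j + n - i + i) mod n" by (simp add: mod_add_left_eq)
  also have "j + n - i + i = j + n" using assms by simp
  also have "(j + n) mod n = j" using assms by simp
  finally show ?thesis .
qed

lemma modlem2:
  fixes i n :: nat
  assumes "i < n"
  shows "Suc ((n - 1 + i) mod n) mod n = i"
proof -
  have "Suc ((n - 1 + i) mod n) mod n = Suc (n - 1 + i) mod n" by (simp add: mod_Suc_eq)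
  also have "Suc (n - 1 + i) = n + i" using assms by simp
  also have "(n + i) mod n = i" using assms by simp
  finally show ?thesis .
qed

lemma rotate_cycle:
  assumes cy: "is_cycle E xs" and i: "i < length xs"
  shows "is_cycle E (rotate i xs)"
  unfolding is_cycle_def
proof (intro conjI allI impI)
  show "3 \<le> length (rotate i xs)" using cy by (simp add: is_cycle_def)
  show "distinct (rotate i xs)" using cy by (simp add: is_cycle_def)
next
  fix k assume k: "k < length (rotate i xs)"
  define n where "n = length xs"
  have n0: "n > 0" using i unfolding n_def by linarith
  have kn: "k < n" using k by (simp add: n_def)
  have "(k + i) mod n < n" using n0 by simp
  then have e: "E (xs ! ((k + i) mod n)) (xs ! (Suc ((k + i) mod n) mod n))"
    using cy unfolding is_cycle_def n_def by blast
  have "Suc k mod n < n" using n0 by simp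
  have "(Suc k mod n + i) mod n = (Suc k + i) mod n" by (simp add: mod_add_left_eq)
  also have "\<dots> = Suc ((k + i) mod n) mod n" by (simp add: mod_Suc_eq)
  finally have eq: "(Suc k mod n + i) mod n = Suc ((k + i) mod n) mod n" .
  have "rotate i xs ! k = xs ! ((k + i) mod n)" using kn by (simp add: nth_rotate n_def add.commute)
  moreover have "rotate i xs ! (Suc k mod n) = xs ! ((Suc k mod n + i) mod n)"
    using \<open>Suc k mod n < n\<close> by (simp add: nth_rotate n_def add.commute)
  ultimately show "E (rotate i xs ! k) (rotate i xs ! (Suc k mod length (rotate i xs)))"
    using e eq by (simp add: n_def)
qed

lemma odd_cycle_bound:
  fixes f :: "'v::finite \<Rightarrow> real"
  assumes sg: "simple_graph E"
  and edge: "\<And>x y. E x y \<Longrightarrow> f x + f y \<le> 1"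
  and tri: "\<And>K. is_clique E K \<Longrightarrow> sum f K \<le> 1"
  and chl: "\<And>xs. is_cycle E xs \<Longrightarrow> chordless E xs \<Longrightarrow> odd (length xs) \<Longrightarrow> 5 \<le> length xs
              \<Longrightarrow> sum_list (map f xs) \<le> (real (length xs) - 1) / 2"
  shows "is_cycle E xs \<Longrightarrow> odd (length xs) \<Longrightarrow> sum_list (map f xs) \<le> (real (length xs) - 1) / 2"
proof (induction "length xs" arbitrary: xs rule: less_induct)
  case less
  define n where "n = length xs"
  have cy: "is_cycle E xs" by (rule less.prems(1))
  have on: "odd n" using less.prems(2) by (simp add: n_def)
  have dx: "distinct xs" and n3: "n \<ge> 3" using cy by (simp_all add: is_cycle_def n_def)
  have edg: "E (xs ! i) (xs ! (Suc i mod n))" if "i < n" for i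
    using cy that unfolding is_cycle_def n_def by blast
  show ?case
  proof (cases "n = 3")
    case True
    have e01: "E (xs ! 0) (xs ! 1)" using edg[of 0] True by simp
    have e12: "E (xs ! 1) (xs ! 2)" using edg[of 1] True by (simp add: numeral_2_eq_2)
    have e20: "E (xs ! 2) (xs ! 0)" using edg[of 2] True by simp
    have "is_clique E (set xs)"
      unfolding is_clique_def
    proof (intro ballI impI)
      fix a b assume a: "a \<in> set xs" and b: "b \<in> set xs" and ab: "a \<noteq> b"
      obtain i where i: "i < 3" "xs ! i = a" using a True by (auto simp: in_set_conv_nth n_def)
      obtain j where j: "j < 3" "xs ! j = b" using b True by (auto simp: in_set_conv_nth n_def)
      have ij: "i \<noteq> j" using i j ab by auto
      have ii: "i = 0 \<or> i = 1 \<or> i = 2" using i(1) by linarith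
      have jj: "j = 0 \<or> j = 1 \<or> j = 2" using j(1) by linarith
      show "E a b"
        using ii jj ij i(2) j(2) e01 e12 e20 sg_sym[OF sg e01] sg_sym[OF sg e12] sg_sym[OF sg e20]
        by fastforce
    qed
    then have "sum f (set xs) \<le> 1" by (rule tri)
    then show ?thesis using True dx by (simp add: sum_list_distinct_conv_sum_set n_def)
  next
    case False
    then have n5: "n \<ge> 5" using on n3 by presburger
    show ?thesis
    proof (cases "chordless E xs")
      case True
      then show ?thesis using chl cy less.prems(2) n5 by (simp add: n_def)
    next
      case False
      then obtain i j where ij: "i < n" "j < n" "E (xs ! i) (xs ! j)"
        "j \<noteq> Suc i mod n" "i \<noteq> Suc j mod n"
        unfolding chordless_def n_def by blast
      define ys where "ys = rotate i xs"
      have lys: "length ys = n" by (simp add: ys_def n_def)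
      have cys: "is_cycle E ys" using rotate_cycle[OF cy] ij(1) by (simp add: ys_def n_def)
      have nth: "ys ! k = xs ! ((k + i) mod n)" if "k < n" for k
        using that by (simp add: ys_def nth_rotate n_def add.commute)
      define d where "d = (j + n - i) mod n"
      have dn: "d < n" using n3 by (simp add: d_def)
      have dj: "(d + i) mod n = j" using modlem1[OF ij(1) ij(2)] by (simp add: d_def)
      have y0: "ys ! 0 = xs ! i" using nth[of 0] n3 ij(1) by simp
      have yd: "ys ! d = xs ! j" using nth[OF dn] dj by simp
      have d0: "d \<noteq> 0"
      proof
        assume "d = 0"
        then have "j = i" using dj ij(1) by simp
        then show False using ij(3) sg_irr[OF sg] by simp
      qed
      have d1: "d \<noteq> 1"
      proof
        assume "d = 1"
        then have "j = Suc i mod n" using dj by simp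
        then show False using ij(4) by simp
      qed
      have dlast: "d \<noteq> n - 1"
      proof
        assume "d = n - 1"
        then have "Suc j mod n = i" using dj modlem2[OF ij(1)] by simp
        then show False using ij(5) by simp
      qed
      have d2: "2 \<le> d" using d0 d1 by linarith
      have dn2: "d + 2 \<le> n" using dn dlast by linarith
      have ch: "E (ys ! 0) (ys ! d)" using y0 yd ij(3) by simp
      have IH: "sum_list (map f zs) \<le> (real (length zs) - 1) / 2"
        if "is_cycle E zs" "odd (length zs)" "length zs < n" for zs
        using less.hyps that by (simp add: n_def)
      have "sum_list (map f ys) \<le> (real n - 1) / 2"
        by (rule chord_split[OF sg cys lys[symmetric] on d2 dn2 ch edge IH])
      moreover have "sum_list (map f ys) = sum_list (map f xs)"
        using dx by (simp add: ys_def sum_list_distinct_conv_sum_set)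
      ultimately show ?thesis by (simp add: n_def)
    qed
  qed
qed


lemma chordless_ge5_props:
  assumes "is_chordless_odd_cycle_ge5 E C"
  shows "odd (card C)" "card C \<ge> 5" "C \<noteq> {}" "is_odd_cycle E C"
proof -
  obtain xs where xs: "is_cycle E xs" "chordless E xs" "set xs = C" "odd (length xs)" "length xs \<ge> 5"
    using assms unfolding is_chordless_odd_cycle_ge5_def by blast
  have "card C = length xs" using xs(1,3) distinct_card[of xs] by (simp add: is_cycle_def)
  then show "odd (card C)" "card C \<ge> 5" using xs by simp_all
  then show "C \<noteq> {}" by auto
  show "is_odd_cycle E C" unfolding is_odd_cycle_def using xs by blast
qed

lemma kk_real:
  assumes "odd (card C)" shows "real_of_int (kk C) = (real (card C) - 1) / 2"
proof -
  obtain m where m: "card C = 2 * m + 1" using assms oddE by blast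
  then have "kk C = int m" by (simp add: kk_def)
  then show ?thesis using m by simp
qed

lemma kk_int:
  assumes "odd (card C)" shows "2 * kk C + 1 = int (card C)"
proof -
  obtain m where m: "card C = 2 * m + 1" using assms oddE by blast
  then have "kk C = int m" by (simp add: kk_def)
  then show ?thesis using m by simp
qed

lemma kk_ge2:
  assumes "odd (card C)" "card C \<ge> 5" shows "kk C \<ge> 2"
  using kk_int[OF assms(1)] assms(2) by linarith

section \<open>HSTAB\<close>

fun sigR :: "'v cs \<Rightarrow> real ^ ('v::finite) \<Rightarrow> real" where
  "sigR (Vx z) p = p $ z"
| "sigR (Kq K) p = 1 - (\<Sum>x\<in>K. p $ x)"
| "sigR (Cy C) p = real_of_int (kk C) - (\<Sum>x\<in>C. p $ x)"

lemma HS: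
  fixes E :: "'v::finite \<Rightarrow> 'v \<Rightarrow> bool"
  assumes sg: "simple_graph E"
  shows "p \<in> HSTAB E \<longleftrightarrow> (\<forall>c. validc E c \<longrightarrow> sigR c p \<ge> 0)"
proof
  assume p: "p \<in> HSTAB E"
  show "\<forall>c. validc E c \<longrightarrow> sigR c p \<ge> 0"
  proof (intro allI impI)
    fix c assume c: "validc E c"
    show "sigR c p \<ge> 0"
    proof (cases c)
      case (Vx z) then show ?thesis using p by (simp add: HSTAB_def)
    next
      case (Kq K)
      then have "is_clique E K" using c by (simp add: validc_def is_maximal_clique_def)
      then show ?thesis using p Kq by (simp add: HSTAB_def)
    next
      case (Cy C)
      then have C: "is_chordless_odd_cycle_ge5 E C" using c by (simp add: validc_def)
      then have "(\<Sum>x\<in>C. p $ x) \<le> (real (card C) - 1) / 2"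
        using p chordless_ge5_props(4)[OF C] by (simp add: HSTAB_def)
      then show ?thesis using Cy kk_real[OF chordless_ge5_props(1)[OF C]] by simp
    qed
  qed
next
  assume H: "\<forall>c. validc E c \<longrightarrow> sigR c p \<ge> 0"
  have nn: "\<forall>x. p $ x \<ge> 0" using H validc_Vx[of E] by (metis sigR.simps(1))
  have cl: "(\<Sum>x\<in>K. p $ x) \<le> 1" if K: "is_clique E K" for K
  proof -
    obtain K' where K': "is_maximal_clique E K'" "K \<subseteq> K'" using clique_in_maximal[OF K] by blast
    have "(\<Sum>x\<in>K. p $ x) \<le> (\<Sum>x\<in>K'. p $ x)"
      by (rule sum_mono2) (use K' nn in auto)
    also have "\<dots> \<le> 1" using H K'(1) by (metis sigR.simps(2) validc_def cs.simps(11) diff_ge_0_iff_ge)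
    finally show ?thesis .
  qed
  have oc: "(\<Sum>x\<in>C. p $ x) \<le> (real (card C) - 1) / 2" if C: "is_odd_cycle E C" for C
  proof -
    obtain xs where xs: "is_cycle E xs" "set xs = C" "odd (length xs)"
      using C unfolding is_odd_cycle_def by blast
    have dx: "distinct xs" using xs(1) by (simp add: is_cycle_def)
    define f where "f = (\<lambda>x. p $ x)"
    have edge: "f x + f y \<le> 1" if e: "E x y" for x y
    proof -
      have "x \<noteq> y" using e sg_irr[OF sg] by auto
      then have "(\<Sum>z\<in>{x, y}. p $ z) = f x + f y" by (simp add: f_def)
      then show ?thesis using cl[OF edge_clique[OF sg e]] by simp
    qed
    have tri: "sum f K \<le> 1" if "is_clique E K" for K using cl[OF that] by (simp add: f_def)
    have chl: "sum_list (map f ys) \<le> (real (length ys) - 1) / 2"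
      if ys: "is_cycle E ys" "chordless E ys" "odd (length ys)" "5 \<le> length ys" for ys
    proof -
      have dy: "distinct ys" using ys(1) by (simp add: is_cycle_def)
      have C': "is_chordless_odd_cycle_ge5 E (set ys)"
        unfolding is_chordless_odd_cycle_ge5_def using ys by blast
      then have "validc E (Cy (set ys))" by (simp add: validc_def)
      then have "sigR (Cy (set ys)) p \<ge> 0" using H by blast
      then have "(\<Sum>x\<in>set ys. p $ x) \<le> real_of_int (kk (set ys))" by simp
      also have "\<dots> = (real (card (set ys)) - 1) / 2"
        by (rule kk_real[OF chordless_ge5_props(1)[OF C']])
      finally show ?thesis using dy by (simp add: sum_list_distinct_conv_sum_set distinct_card f_def)
    qed
    have "sum_list (map f xs) \<le> (real (length xs) - 1) / 2"
      by (rule odd_cycle_bound[OF sg edge tri chl xs(1) xs(3)])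
    moreover have "card C = length xs" using dx xs(2) distinct_card by blast
    ultimately show ?thesis using dx xs(2) by (simp add: sum_list_distinct_conv_sum_set f_def)
  qed
  show "p \<in> HSTAB E" unfolding HSTAB_def using nn cl oc by blast
qed


section \<open>The Ehrhart ring as DD 0\<close>

lemma sigR_restrV:
  assumes "f None > 0"
  shows "sigR c (restrV f) = real_of_int (sig c f) / real_of_int (f None)"
proof -
  have fN: "real_of_int (f None) \<noteq> 0" using assms by simp
  show ?thesis
  proof (cases c)
    case (Vx z) then show ?thesis by (simp add: restrV_def)
  next
    case (Kq K)
    have "(\<Sum>x\<in>K. restrV f $ x) = (\<Sum>x\<in>K. real_of_int (f (Some x))) / real_of_int (f None)"
      by (simp add: restrV_def sum_divide_distrib)
    then show ?thesis using Kq fN by (simp add: field_simps)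
  next
    case (Cy C)
    have "(\<Sum>x\<in>C. restrV f $ x) = (\<Sum>x\<in>C. real_of_int (f (Some x))) / real_of_int (f None)"
      by (simp add: restrV_def sum_divide_distrib)
    then show ?thesis using Cy fN by (simp add: field_simps)
  qed
qed

lemma maximal_clique_through:
  fixes E :: "'v::finite \<Rightarrow> 'v \<Rightarrow> bool"
  shows "\<exists>K. is_maximal_clique E K \<and> z \<in> K"
proof -
  have "is_clique E {z}" by (simp add: is_clique_def)
  then show ?thesis using clique_in_maximal by blast
qed

lemma Dlat_props:
  fixes E :: "'v::finite \<Rightarrow> 'v \<Rightarrow> bool"
  assumes "\<mu> \<in> Dlat E a" "a \<ge> 0"
  shows "\<mu> (Some z) \<ge> a" "\<mu> None \<ge> a + \<mu> (Some z)"
proof -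
  have nn: "\<mu> (Some x) \<ge> a" for x using assms validc_Vx[of E x] unfolding Dlat_def by fastforce
  then show "\<mu> (Some z) \<ge> a" .
  obtain K where K: "is_maximal_clique E K" "z \<in> K" using maximal_clique_through by blast
  have "validc E (Kq K)" using K(1) by (simp add: validc_def)
  then have "sig (Kq K) \<mu> \<ge> a" using assms(1) unfolding Dlat_def by blast
  then have "\<mu> None \<ge> a + (\<Sum>x\<in>K. \<mu> (Some x))" by simp
  moreover have "\<mu> (Some z) \<le> (\<Sum>x\<in>K. \<mu> (Some x))"
    by (rule member_le_sum) (use K(2) nn assms(2) in \<open>auto intro: order_trans\<close>)
  ultimately show "\<mu> None \<ge> a + \<mu> (Some z)" by linarith
qed

lemma Dlat0_zero:
  fixes E :: "'v::finite \<Rightarrow> 'v \<Rightarrow> bool"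
  assumes "\<mu> \<in> Dlat E 0" "\<mu> None \<le> 0"
  shows "\<mu> = 0"
proof
  fix w show "\<mu> w = 0 w"
  proof (cases w)
    case None
    have "\<mu> None \<ge> 0 + \<mu> (Some undefined)" "\<mu> (Some undefined) \<ge> 0"
      using Dlat_props[OF assms(1)] by simp_all
    then show ?thesis using None assms(2) by simp
  next
    case (Some z)
    have "\<mu> None \<ge> 0 + \<mu> (Some z)" "\<mu> (Some z) \<ge> 0" using Dlat_props[OF assms(1)] by simp_all
    then show ?thesis using Some assms(2) by simp
  qed
qed

lemma Dlat0_HSTAB:
  fixes E :: "'v::finite \<Rightarrow> 'v \<Rightarrow> bool"
  assumes sg: "simple_graph E" and f: "f None > 0"
  shows "f \<in> Dlat E 0 \<longleftrightarrow> restrV f \<in> HSTAB E"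
proof -
  have "restrV f \<in> HSTAB E \<longleftrightarrow> (\<forall>c. validc E c \<longrightarrow> sigR c (restrV f) \<ge> 0)" by (rule HS[OF sg])
  also have "\<dots> \<longleftrightarrow> (\<forall>c. validc E c \<longrightarrow> sig c f \<ge> 0)"
    using f by (simp add: sigR_restrV zero_le_divide_iff)
  finally show ?thesis by (simp add: Dlat_def)
qed

lemma poly_decomp:
  fixes p :: "('a \<Rightarrow>\<^sub>0 'b::comm_monoid_add)"
  shows "p = (\<Sum>k\<in>Poly_Mapping.keys p. Poly_Mapping.single k (Poly_Mapping.lookup p k))"
proof (rule poly_mapping_eqI)
  fix i
  have "Poly_Mapping.lookup (\<Sum>k\<in>Poly_Mapping.keys p. Poly_Mapping.single k (Poly_Mapping.lookup p k)) i
      = (\<Sum>k\<in>Poly_Mapping.keys p. Poly_Mapping.lookup (Poly_Mapping.single k (Poly_Mapping.lookup p k)) i)"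
    by (simp add: lookup_sum)
  also have "\<dots> = (\<Sum>k\<in>Poly_Mapping.keys p. if k = i then Poly_Mapping.lookup p k else 0)"
    by (rule sum.cong) (simp_all add: lookup_single when_def)
  also have "\<dots> = Poly_Mapping.lookup p i"
    by (simp add: sum.delta' in_keys_iff)
  finally show "Poly_Mapping.lookup p i = Poly_Mapping.lookup (\<Sum>k\<in>Poly_Mapping.keys p. Poly_Mapping.single k (Poly_Mapping.lookup p k)) i" by simp
qed

lemma R_sum:
  assumes "finite A" "\<forall>k\<in>A. g k \<in> ehrhart_ring E"
  shows "sum g A \<in> ehrhart_ring E"
  using assms
proof (induction A rule: finite_induct)
  case empty
  have "Poly_Mapping.single 0 0 \<in> ehrhart_ring E" by (rule ehrhart_ring.const)
  then show ?case by simp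
next
  case (insert x F)
  then show ?case by (simp add: ehrhart_ring.add)
qed

lemma hR:
  fixes E :: "'v::finite \<Rightarrow> 'v \<Rightarrow> bool"
  assumes sg: "simple_graph E"
  shows "(ehrhart_ring E :: ('v, 'k::field) laurent set) = DD E 0"
proof (intro set_eqI iffI)
  fix p :: "('v, 'k) laurent"
  assume "p \<in> ehrhart_ring E"
  then show "p \<in> DD E 0"
  proof induction
    case (const c) then show ?case by (rule single0_DD)
  next
    case (gen f)
    then have "f \<in> Dlat E 0" using Dlat0_HSTAB[OF sg] by blast
    then show ?case using monom_DD by blast
  next
    case (add p q) then show ?case using DD_add[of p E 0 q] by simp
  next
    case (mult p q) then show ?case using DD_mult[of p E 0 q 0] by simp
  qed
next
  fix p :: "('v, 'k) laurent"
  assume p: "p \<in> DD E 0"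
  have "(Poly_Mapping.single k c :: ('v, 'k) laurent) \<in> ehrhart_ring E" if k: "k \<in> Dlat E 0" for k and c :: 'k
  proof (cases "k None > 0")
    case True
    then have "restrV k \<in> HSTAB E" using Dlat0_HSTAB[of E k, OF sg True] k by blast
    then have "(monom k :: ('v, 'k) laurent) \<in> ehrhart_ring E" using ehrhart_ring.gen True by blast
    then have "Poly_Mapping.single 0 c * monom k \<in> ehrhart_ring E"
      using ehrhart_ring.mult[OF ehrhart_ring.const[of c E]] by blast
    moreover have "Poly_Mapping.single 0 c * (monom k :: ('v, 'k) laurent) = Poly_Mapping.single k c"
      by (simp add: monom_def mult_single)
    ultimately show ?thesis by simp
  next
    case False
    then have "k = 0" using Dlat0_zero[OF k] by simp
    then show ?thesis by (simp add: ehrhart_ring.const)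
  qed
  then have "\<forall>k\<in>Poly_Mapping.keys p. Poly_Mapping.single k (Poly_Mapping.lookup p k) \<in> ehrhart_ring E"
    using p unfolding DD_def by blast
  then have "(\<Sum>k\<in>Poly_Mapping.keys p. Poly_Mapping.single k (Poly_Mapping.lookup p k)) \<in> ehrhart_ring E"
    by (intro R_sum) simp_all
  then show "p \<in> ehrhart_ring E" using poly_decomp[of p] by simp
qed


section \<open>Relative interior and the canonical ideal\<close>

definition OpenC :: "('v::finite \<Rightarrow> 'v \<Rightarrow> bool) \<Rightarrow> (real ^ 'v) set" where
  "OpenC E = {p. \<forall>c. validc E c \<longrightarrow> sigR c p > 0}"

lemma OpenC_sub:
  fixes E :: "'v::finite \<Rightarrow> 'v \<Rightarrow> bool"
  assumes sg: "simple_graph E" shows "OpenC E \<subseteq> HSTAB E"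
  using HS[OF sg] unfolding OpenC_def by (auto intro: less_imp_le)

lemma sigR_cont: "continuous_on UNIV (\<lambda>p. sigR c p)"
  by (cases c) (simp_all add: continuous_on_component continuous_on_id continuous_intros)

lemma OpenC_open:
  fixes E :: "'v::finite \<Rightarrow> 'v \<Rightarrow> bool"
  shows "open (OpenC E)"
proof -
  have "OpenC E = (\<Inter>c\<in>{c. validc E c}. {p. (\<lambda>p. 0) p < sigR c p})" unfolding OpenC_def by auto
  moreover have "finite {c :: 'v cs. validc E c}" using finite_cs by (rule finite_subset[rotated]) simp
  moreover have "open {p. (\<lambda>p. 0) p < sigR c p}" for c :: "'v cs"
    by (rule open_Collect_less[OF continuous_on_const sigR_cont])
  ultimately show ?thesis by (simp add: open_INT)
qed

lemma OpenC_nonempty: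
  fixes E :: "'v::finite \<Rightarrow> 'v \<Rightarrow> bool"
  shows "OpenC E \<noteq> {}"
proof -
  define N where "N = real (card (UNIV :: 'v set))"
  define p0 :: "real ^ 'v" where "p0 = (\<chi> x. 1 / (N + 3))"
  have Npos: "N + 3 > 0" by (simp add: N_def add_nonneg_pos)
  have sumK: "(\<Sum>x\<in>K. p0 $ x) = real (card K) / (N + 3)" for K :: "'v set"
    by (simp add: p0_def)
  have cardle: "real (card K) \<le> N" for K :: "'v set"
    unfolding N_def by (simp add: card_mono)
  have "sigR c p0 > 0" if c: "validc E c" for c
  proof (cases c)
    case (Vx z) then show ?thesis using Npos by (simp add: p0_def)
  next
    case (Kq K)
    have "real (card K) / (N + 3) < 1" using cardle[of K] Npos by (simp add: divide_less_eq)
    then show ?thesis using Kq sumK by simp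
  next
    case (Cy C)
    then have C: "is_chordless_odd_cycle_ge5 E C" using c by (simp add: validc_def)
    have "kk C \<ge> 2" using kk_ge2 chordless_ge5_props[OF C] by blast
    moreover have "real (card C) / (N + 3) < 1" using cardle[of C] Npos by (simp add: divide_less_eq)
    ultimately show ?thesis using Cy sumK by simp
  qed
  then have "p0 \<in> OpenC E" unfolding OpenC_def by blast
  then show ?thesis by blast
qed

lemma sigR_dir:
  fixes E :: "'v::finite \<Rightarrow> 'v \<Rightarrow> bool"
  assumes c: "validc E c"
  shows "\<exists>d g. g > 0 \<and> (\<forall>t p. sigR c (p + t *\<^sub>R d) = sigR c p - t * g)"
proof (cases c)
  case (Vx z)
  have "sigR c (p + t *\<^sub>R (- axis z 1)) = sigR c p - t * 1" for t p
    using Vx by (simp add: axis_def)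
  then show ?thesis by (intro exI[of _ "- axis z 1"] exI[of _ 1]) simp
next
  case (Kq K)
  define d :: "real ^ 'v" where "d = (\<chi> x. if x \<in> K then 1 else 0)"
  have "K \<noteq> {}" using c Kq maximal_clique_nonempty by (simp add: validc_def)
  then have g: "real (card K) > 0" by (simp add: card_gt_0_iff)
  have "sigR c (p + t *\<^sub>R d) = sigR c p - t * real (card K)" for t p
    using Kq by (simp add: d_def sum.distrib)
  then show ?thesis using g by blast
next
  case (Cy C)
  define d :: "real ^ 'v" where "d = (\<chi> x. if x \<in> C then 1 else 0)"
  have "C \<noteq> {}" using c Cy chordless_ge5_props(3) by (simp add: validc_def)
  then have g: "real (card C) > 0" by (simp add: card_gt_0_iff)
  have "sigR c (p + t *\<^sub>R d) = sigR c p - t * real (card C)" for t p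
    using Cy by (simp add: d_def sum.distrib)
  then show ?thesis using g by blast
qed

lemma interior_sub_OO:
  fixes E :: "'v::finite \<Rightarrow> 'v \<Rightarrow> bool"
  assumes sg: "simple_graph E"
  shows "interior (HSTAB E) \<subseteq> OpenC E"
proof
  fix p assume "p \<in> interior (HSTAB E)"
  then obtain e where e: "e > 0" "ball p e \<subseteq> HSTAB E" using mem_interior by blast
  have "sigR c p > 0" if c: "validc E c" for c
  proof -
    obtain d g where dg: "g > 0" "\<And>t p. sigR c (p + t *\<^sub>R d) = sigR c p - t * g"
      using sigR_dir[OF c] by blast
    define t where "t = e / (2 * (norm d + 1))"
    have tpos: "t > 0" using e(1) by (simp add: t_def add_nonneg_pos)
    have "t * norm d \<le> t * (norm d + 1)" using tpos by simp
    also have "t * (norm d + 1) = e / 2"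
    proof -
      have n0: "norm d \<ge> 0" by simp
      have nz: "norm d + 1 \<noteq> 0" "2 + norm d * 2 \<noteq> 0" "2 * (norm d + 1) \<noteq> 0"
        using n0 by (smt (verit))+
      then show ?thesis unfolding t_def by (simp add: field_simps)
    qed
    finally have "t * norm d < e" using e(1) by simp
    then have "dist p (p + t *\<^sub>R d) < e" using tpos by (simp add: dist_norm)
    then have "p + t *\<^sub>R d \<in> HSTAB E" using e(2) by (auto simp: ball_def)
    then have "sigR c (p + t *\<^sub>R d) \<ge> 0" using HS[OF sg] c by blast
    then have "sigR c p \<ge> t * g" using dg(2) by simp
    moreover have "t * g > 0" using tpos dg(1) by simp
    ultimately show ?thesis by linarith
  qed
  then show "p \<in> OpenC E" unfolding OpenC_def by blast
qed

lemma rel_interior_HSTAB: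
  fixes E :: "'v::finite \<Rightarrow> 'v \<Rightarrow> bool"
  assumes sg: "simple_graph E"
  shows "rel_interior (HSTAB E) = OpenC E"
proof -
  have "OpenC E \<subseteq> interior (HSTAB E)" by (rule interior_maximal[OF OpenC_sub[OF sg] OpenC_open])
  then have eq: "interior (HSTAB E) = OpenC E" using interior_sub_OO[OF sg] by blast
  then have "interior (HSTAB E) \<noteq> {}" using OpenC_nonempty by simp
  then have "rel_interior (HSTAB E) = interior (HSTAB E)" by (rule rel_interior_nonempty_interior)
  then show ?thesis using eq by simp
qed

lemma Dlat1_char:
  fixes E :: "'v::finite \<Rightarrow> 'v \<Rightarrow> bool"
  assumes sg: "simple_graph E"
  shows "f \<in> Dlat E 1 \<longleftrightarrow> f None > 0 \<and> restrV f \<in> rel_interior (HSTAB E)"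
proof
  assume f: "f \<in> Dlat E 1"
  have "f None \<ge> 1 + f (Some undefined)" "f (Some undefined) \<ge> 1" using Dlat_props[OF f] by simp_all
  then have fN: "f None > 0" by simp
  have "sigR c (restrV f) > 0" if "validc E c" for c
  proof -
    have "sig c f \<ge> 1" using f that unfolding Dlat_def by blast
    then show ?thesis using fN by (simp add: sigR_restrV)
  qed
  then show "f None > 0 \<and> restrV f \<in> rel_interior (HSTAB E)"
    using fN rel_interior_HSTAB[OF sg] unfolding OpenC_def by blast
next
  assume H: "f None > 0 \<and> restrV f \<in> rel_interior (HSTAB E)"
  then have fN: "f None > 0" and r: "restrV f \<in> OpenC E" using rel_interior_HSTAB[OF sg] by auto
  have "sig c f \<ge> 1" if c: "validc E c" for c
  proof -
    have "sigR c (restrV f) > 0" using r c unfolding OpenC_def by blast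
    then have "real_of_int (sig c f) / real_of_int (f None) > 0" using fN by (simp add: sigR_restrV)
    then have "sig c f > 0" using fN by (simp add: zero_less_divide_iff)
    then show ?thesis by simp
  qed
  then show "f \<in> Dlat E 1" unfolding Dlat_def by blast
qed

lemma hOmega:
  fixes E :: "'v::finite \<Rightarrow> 'v \<Rightarrow> bool"
  assumes sg: "simple_graph E"
  shows "(canonical_ideal E :: ('v, 'k::field) laurent set) = DD E 1"
  unfolding canonical_ideal_def DD_def using Dlat1_char[OF sg] by blast


definition wv :: "int \<Rightarrow> int \<Rightarrow> 'v set \<Rightarrow> 'v option \<Rightarrow> int" where
  "wv N M S = (\<lambda>x. case x of None \<Rightarrow> N | Some y \<Rightarrow> if y \<in> S then M else 1)"

lemma sum_split_MS:
  assumes "finite A"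
  shows "(\<Sum>x\<in>A. (if x \<in> S then M else 1::int)) = M * int (card (A \<inter> S)) + int (card (A - S))"
proof -
  have "(\<Sum>x\<in>A. (if x \<in> S then M else 1::int)) = (\<Sum>x\<in>A \<inter> S. M) + (\<Sum>x\<in>A - S. 1)"
    using assms by (simp add: sum.If_cases Diff_eq)
  then show ?thesis by simp
qed

lemma sig_wv:
  fixes S :: "'v::finite set"
  shows "sig (Vx y) (wv N M S) = (if y \<in> S then M else 1)"
    "sig (Kq K) (wv N M S) = N - (M * int (card (K \<inter> S)) + int (card (K - S)))"
    "sig (Cy C) (wv N M S) = N * kk C - (M * int (card (C \<inter> S)) + int (card (C - S)))"
  by (simp_all add: wv_def sum_split_MS)

lemma card_le_U: "int (card (A :: 'v::finite set)) \<le> int (card (UNIV :: 'v set))"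
  by (simp add: card_mono)

lemma chordless_not_sub:
  fixes E :: "'v::finite \<Rightarrow> 'v \<Rightarrow> bool"
  assumes sg: "simple_graph E" and C: "is_chordless_odd_cycle_ge5 E C"
  and C': "is_chordless_odd_cycle_ge5 E C'" and ne: "C' \<noteq> C"
  shows "int (card (C' \<inter> C)) \<le> 2 * kk C'"
proof -
  obtain xs where xs: "is_cycle E xs" "chordless E xs" "set xs = C"
    using C unfolding is_chordless_odd_cycle_ge5_def by blast
  obtain ys where ys: "is_cycle E ys" "set ys = C'"
    using C' unfolding is_chordless_odd_cycle_ge5_def by blast
  have "\<not> C' \<subseteq> C"
  proof
    assume "C' \<subseteq> C"
    then have "set ys = set xs" using cycle_subset_chordless[OF sg xs(1) xs(2) ys(1)] xs(3) ys(2) by simp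
    then show False using ne xs(3) ys(2) by simp
  qed
  then have "C' \<inter> C \<subset> C'" by blast
  then have "card (C' \<inter> C) < card C'" by (simp add: psubset_card_mono)
  then show ?thesis using kk_int[OF chordless_ge5_props(1)[OF C']] by linarith
qed

lemma clique_chordless_inter:
  fixes E :: "'v::finite \<Rightarrow> 'v \<Rightarrow> bool"
  assumes sg: "simple_graph E" and K: "is_clique E K" and C: "is_chordless_odd_cycle_ge5 E C"
  shows "card (K \<inter> C) \<le> 2"
proof -
  obtain xs where xs: "is_cycle E xs" "chordless E xs" "set xs = C" "length xs \<ge> 5"
    using C unfolding is_chordless_odd_cycle_ge5_def by blast
  show ?thesis using clique_cycle_inter[OF sg K xs(1) xs(2)] xs(3,4) by simp
qed

lemma mono_mult_int:
  fixes M x y :: int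
  assumes "M \<ge> 0" "x \<le> y" shows "M * x \<le> M * y"
  using assms by (simp add: mult_left_mono)

lemma base_witness:
  fixes E :: "'v::finite \<Rightarrow> 'v \<Rightarrow> bool"
  assumes sg: "simple_graph E" and c: "validc E c"
  shows "\<exists>\<nu>0 w. sig c \<nu>0 = 1 \<and> sig c w = 0 \<and> (\<forall>c'. validc E c' \<and> c' \<noteq> c \<longrightarrow> sig c' w \<ge> 1)"
proof -
  define U where "U = int (card (UNIV :: 'v set))"
  have U0: "U \<ge> 0" by (simp add: U_def)
  have cU: "int (card (A :: 'v set)) \<le> U" for A unfolding U_def by (rule card_le_U)
  show ?thesis
  proof (cases c)
    case (Vx z)
    define w where "w = wv (U + 1) 0 {z}"
    define \<nu>0 where "\<nu>0 = (\<lambda>x. if x = Some z then 1 else (0::int))"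
    have "sig c \<nu>0 = 1" using Vx by (simp add: \<nu>0_def)
    moreover have "sig c w = 0" using Vx by (simp add: w_def wv_def)
    moreover have "sig c' w \<ge> 1" if c': "validc E c'" "c' \<noteq> c" for c'
    proof (cases c')
      case (Vx y) then show ?thesis using c' \<open>c = Vx z\<close> by (simp add: w_def wv_def)
    next
      case (Kq K)
      have "int (card (K - {z})) \<le> U" by (rule cU)
      then show ?thesis using Kq by (simp add: w_def sig_wv del: sig.simps)
    next
      case (Cy C)
      then have C: "is_chordless_odd_cycle_ge5 E C" using c' by (simp add: validc_def)
      have k2: "kk C \<ge> 2" using kk_ge2 chordless_ge5_props[OF C] by blast
      have "(U + 1) * 2 \<le> (U + 1) * kk C" by (rule mono_mult_int) (use U0 k2 in auto)
      moreover have "int (card (C - {z})) \<le> U" by (rule cU)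
      ultimately show ?thesis using Cy by (simp add: w_def sig_wv del: sig.simps)
    qed
    ultimately show ?thesis by blast
  next
    case (Kq K)
    then have Km: "is_maximal_clique E K" using c by (simp add: validc_def)
    have Kne: "K \<noteq> {}" by (rule maximal_clique_nonempty[OF Km])
    define cK where "cK = int (card K)"
    have cK1: "cK \<ge> 1" using Kne by (simp add: cK_def card_gt_0_iff Suc_le_eq)
    define M where "M = U + 1"
    have M1: "M \<ge> 1" using U0 by (simp add: M_def)
    define w where "w = wv (M * cK) M K"
    define \<nu>0 where "\<nu>0 = (\<lambda>x :: 'v option. if x = None then 1 else (0::int))"
    have "sig c \<nu>0 = 1" using Kq by (simp add: \<nu>0_def)
    moreover have "sig c w = 0" using Kq by (simp add: w_def sig_wv cK_def del: sig.simps)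
    moreover have "sig c' w \<ge> 1" if c': "validc E c'" "c' \<noteq> c" for c'
    proof (cases c')
      case (Vx y) then show ?thesis using M1 by (simp add: w_def wv_def)
    next
      case (Kq K')
      then have K'm: "is_maximal_clique E K'" using c' by (simp add: validc_def)
      have "K' \<noteq> K" using Kq c' \<open>c = Kq K\<close> by simp
      have "\<not> K \<subseteq> K'"
      proof
        assume "K \<subseteq> K'"
        then have "K' = K" using Km K'm unfolding is_maximal_clique_def by blast
        then show False using \<open>K' \<noteq> K\<close> by simp
      qed
      then have "K' \<inter> K \<subset> K" by blast
      then have "card (K' \<inter> K) < card K" by (simp add: psubset_card_mono)
      then have j: "int (card (K' \<inter> K)) \<le> cK - 1" by (simp add: cK_def)
      have "M * int (card (K' \<inter> K)) \<le> M * (cK - 1)" by (rule mono_mult_int) (use M1 j in auto)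
      moreover have "int (card (K' - K)) \<le> U" by (rule cU)
      ultimately show ?thesis using Kq by (simp add: w_def sig_wv M_def algebra_simps del: sig.simps)
    next
      case (Cy C)
      then have C: "is_chordless_odd_cycle_ge5 E C" using c' by (simp add: validc_def)
      have k2: "kk C \<ge> 2" using kk_ge2 chordless_ge5_props[OF C] by blast
      have Kc: "is_clique E K" using Km by (simp add: is_maximal_clique_def)
      have j2: "int (card (C \<inter> K)) \<le> 2" using clique_chordless_inter[OF sg Kc C] by (simp add: Int_commute)
      have jK: "int (card (C \<inter> K)) \<le> cK" by (simp add: cK_def card_mono)
      have "cK * 2 \<le> cK * kk C" by (rule mono_mult_int) (use cK1 k2 in auto)
      then have X: "cK * kk C - int (card (C \<inter> K)) \<ge> 1" using j2 jK cK1 by linarith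
      have "M * 1 \<le> M * (cK * kk C - int (card (C \<inter> K)))" by (rule mono_mult_int) (use M1 X in auto)
      moreover have "int (card (C - K)) \<le> U" by (rule cU)
      ultimately show ?thesis using Cy by (simp add: w_def sig_wv M_def algebra_simps del: sig.simps)
    qed
    ultimately show ?thesis by blast
  next
    case (Cy C)
    then have C: "is_chordless_odd_cycle_ge5 E C" using c by (simp add: validc_def)
    define k where "k = kk C"
    have k2: "k \<ge> 2" using kk_ge2 chordless_ge5_props[OF C] by (simp add: k_def)
    have cC: "int (card C) = 2 * k + 1" using kk_int[OF chordless_ge5_props(1)[OF C]] by (simp add: k_def)
    obtain c0 where c0: "c0 \<in> C" using chordless_ge5_props(3)[OF C] by blast
    define t0 where "t0 = U + 1"
    have t1: "t0 \<ge> 1" using U0 by (simp add: t0_def)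
    define w where "w = wv ((2 * k + 1) * t0) (k * t0) C"
    define \<nu>0 where "\<nu>0 = (\<lambda>x. if x = Some c0 then -1 else (0::int))"
    have "(\<Sum>x\<in>C. \<nu>0 (Some x)) = -1" using c0 by (simp add: \<nu>0_def)
    then have "sig c \<nu>0 = 1" using Cy by (simp add: \<nu>0_def)
    moreover have "sig c w = 0" using Cy cC by (simp add: w_def sig_wv k_def algebra_simps del: sig.simps)
    moreover have "sig c' w \<ge> 1" if c': "validc E c'" "c' \<noteq> c" for c'
    proof (cases c')
      case (Vx y)
      have "k * t0 \<ge> 1 * 1" using k2 t1 by (intro mult_mono) auto
      then show ?thesis using Vx by (simp add: w_def wv_def)
    next
      case (Kq K')
      then have K'm: "is_maximal_clique E K'" using c' by (simp add: validc_def)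
      have Kc: "is_clique E K'" using K'm by (simp add: is_maximal_clique_def)
      have j2: "int (card (K' \<inter> C)) \<le> 2" using clique_chordless_inter[OF sg Kc C] by simp
      have "(k * t0) * int (card (K' \<inter> C)) \<le> (k * t0) * 2"
        by (rule mono_mult_int) (use k2 t1 j2 in auto)
      moreover have "int (card (K' - C)) \<le> U" by (rule cU)
      ultimately show ?thesis using Kq by (simp add: w_def sig_wv t0_def algebra_simps del: sig.simps)
    next
      case (Cy C')
      then have C': "is_chordless_odd_cycle_ge5 E C'" using c' by (simp add: validc_def)
      have ne: "C' \<noteq> C" using Cy c' \<open>c = Cy C\<close> by simp
      define m where "m = kk C'"
      have m2: "m \<ge> 2" using kk_ge2 chordless_ge5_props[OF C'] by (simp add: m_def)
      have j: "int (card (C' \<inter> C)) \<le> 2 * m"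
        using chordless_not_sub[OF sg C C' ne] by (simp add: m_def)
      have "(k * t0) * int (card (C' \<inter> C)) \<le> (k * t0) * (2 * m)"
        by (rule mono_mult_int) (use k2 t1 j in auto)
      moreover have "int (card (C' - C)) \<le> U" by (rule cU)
      moreover have "t0 * 1 \<le> t0 * m" by (rule mono_mult_int) (use t1 m2 in auto)
      ultimately show ?thesis using Cy by (simp add: w_def sig_wv t0_def m_def algebra_simps del: sig.simps)
    qed
    ultimately show ?thesis by blast
  qed
qed


lemma W_lemma:
  fixes E :: "'v::finite \<Rightarrow> 'v \<Rightarrow> bool"
  assumes sg: "simple_graph E" and c: "validc E c"
  shows "\<exists>\<nu>. sig c \<nu> = a \<and> \<nu> \<in> Dlat E a"
proof -
  obtain \<nu>0 w where b: "sig c \<nu>0 = 1" "sig c w = 0" "\<forall>c'. validc E c' \<and> c' \<noteq> c \<longrightarrow> sig c' w \<ge> 1"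
    using base_witness[OF sg c] by blast
  define B where "B = (\<Sum>c'\<in>(UNIV :: 'v cs set). \<bar>sig c' \<nu>0\<bar>)"
  have Bb: "\<bar>sig c' \<nu>0\<bar> \<le> B" for c' unfolding B_def by (rule sum_bound[OF finite_cs]) simp
  define t where "t = \<bar>a\<bar> * (1 + B)"
  have B0: "B \<ge> 0" unfolding B_def by (simp add: sum_nonneg)
  have t0: "t \<ge> 0" unfolding t_def using B0 by simp
  define \<nu> where "\<nu> = (\<lambda>x. a * \<nu>0 x + t * w x)"
  have sl: "sig c' \<nu> = a * sig c' \<nu>0 + t * sig c' w" for c' unfolding \<nu>_def by (rule sig_lin)
  have "sig c \<nu> = a" using sl b by simp
  moreover have "sig c' \<nu> \<ge> a" if c': "validc E c'" for c'
  proof (cases "c' = c")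
    case True then show ?thesis using \<open>sig c \<nu> = a\<close> by simp
  next
    case False
    then have s1: "sig c' w \<ge> 1" using b(3) c' by blast
    have "\<bar>a * sig c' \<nu>0\<bar> \<le> \<bar>a\<bar> * B" unfolding abs_mult by (rule mono_mult_int) (use Bb in auto)
    then have A: "a * sig c' \<nu>0 \<ge> - (\<bar>a\<bar> * B)" by linarith
    have T: "t * 1 \<le> t * sig c' w" by (rule mono_mult_int) (use t0 s1 in auto)
    have "t = \<bar>a\<bar> + \<bar>a\<bar> * B" unfolding t_def by (simp add: algebra_simps)
    then show ?thesis using sl[of c'] A T by linarith
  qed
  ultimately show ?thesis unfolding Dlat_def by blast
qed

lemma P_lemma:
  fixes E :: "'v::finite \<Rightarrow> 'v \<Rightarrow> bool"
  shows "\<exists>\<rho>. \<forall>c. validc E c \<longrightarrow> sig c \<rho> \<ge> 1"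
proof -
  define U where "U = int (card (UNIV :: 'v set))"
  have U0: "U \<ge> 0" by (simp add: U_def)
  have cU: "int (card (A :: 'v set)) \<le> U" for A unfolding U_def by (rule card_le_U)
  define \<rho> where "\<rho> = wv (U + 1) 1 ({} :: 'v set)"
  have "sig c \<rho> \<ge> 1" if c: "validc E c" for c
  proof (cases c)
    case (Vx z) then show ?thesis by (simp add: \<rho>_def wv_def)
  next
    case (Kq K)
    have "int (card K) \<le> U" by (rule cU)
    then show ?thesis using Kq by (simp add: \<rho>_def sig_wv del: sig.simps)
  next
    case (Cy C)
    then have C: "is_chordless_odd_cycle_ge5 E C" using c by (simp add: validc_def)
    have k2: "kk C \<ge> 2" using kk_ge2 chordless_ge5_props[OF C] by blast
    have "(U + 1) * 2 \<le> (U + 1) * kk C" by (rule mono_mult_int) (use U0 k2 in auto)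
    moreover have "int (card C) \<le> U" by (rule cU)
    ultimately show ?thesis using Cy by (simp add: \<rho>_def sig_wv del: sig.simps)
  qed
  then show ?thesis by blast
qed

lemma U_eq:
  fixes E :: "'v::finite \<Rightarrow> 'v \<Rightarrow> bool"
  shows "\<mu> \<in> Dlat E n \<longleftrightarrow> \<mu> \<in> U_set E n"
proof -
  have cyc: "sig (Cy C) \<mu> \<ge> n \<longleftrightarrow>
      real_of_int (\<Sum>x\<in>C. \<mu> (Some x)) \<le> real_of_int (\<mu> None) * (real (card C) - 1) / 2 - real_of_int n"
    if C: "is_chordless_odd_cycle_ge5 E C" for C
  proof -
    have kr: "real_of_int (kk C) = (real (card C) - 1) / 2" by (rule kk_real[OF chordless_ge5_props(1)[OF C]])
    have "sig (Cy C) \<mu> \<ge> n \<longleftrightarrow> real_of_int (sig (Cy C) \<mu>) \<ge> real_of_int n" by (rule of_int_le_iff[symmetric])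
    also have "real_of_int (sig (Cy C) \<mu>) = real_of_int (\<mu> None) * ((real (card C) - 1) / 2) - real_of_int (\<Sum>x\<in>C. \<mu> (Some x))"
      using kr by simp
    finally show ?thesis by (simp add: algebra_simps)
  qed
  have "\<mu> \<in> Dlat E n \<longleftrightarrow> (\<forall>z. sig (Vx z) \<mu> \<ge> n) \<and> (\<forall>K. is_maximal_clique E K \<longrightarrow> sig (Kq K) \<mu> \<ge> n)
      \<and> (\<forall>C. is_chordless_odd_cycle_ge5 E C \<longrightarrow> sig (Cy C) \<mu> \<ge> n)"
  proof
    assume "\<mu> \<in> Dlat E n"
    then have H: "\<forall>c. validc E c \<longrightarrow> sig c \<mu> \<ge> n" by (simp add: Dlat_def)
    show "(\<forall>z. sig (Vx z) \<mu> \<ge> n) \<and> (\<forall>K. is_maximal_clique E K \<longrightarrow> sig (Kq K) \<mu> \<ge> n)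
      \<and> (\<forall>C. is_chordless_odd_cycle_ge5 E C \<longrightarrow> sig (Cy C) \<mu> \<ge> n)"
    proof (intro conjI allI impI)
      fix z show "sig (Vx z) \<mu> \<ge> n" using H validc_Vx[of E z] by blast
    next
      fix K assume "is_maximal_clique E K"
      then have "validc E (Kq K)" by (simp add: validc_def)
      then show "sig (Kq K) \<mu> \<ge> n" using H by blast
    next
      fix C assume "is_chordless_odd_cycle_ge5 E C"
      then have "validc E (Cy C)" by (simp add: validc_def)
      then show "sig (Cy C) \<mu> \<ge> n" using H by blast
    qed
  next
    assume H: "(\<forall>z. sig (Vx z) \<mu> \<ge> n) \<and> (\<forall>K. is_maximal_clique E K \<longrightarrow> sig (Kq K) \<mu> \<ge> n)
      \<and> (\<forall>C. is_chordless_odd_cycle_ge5 E C \<longrightarrow> sig (Cy C) \<mu> \<ge> n)"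
    have "sig c \<mu> \<ge> n" if c: "validc E c" for c
    proof (cases c)
      case (Vx z) then show ?thesis using H by blast
    next
      case (Kq K) then show ?thesis using H c by (simp add: validc_def)
    next
      case (Cy C) then show ?thesis using H c by (simp add: validc_def)
    qed
    then show "\<mu> \<in> Dlat E n" by (simp add: Dlat_def)
  qed
  also have "\<dots> \<longleftrightarrow> \<mu> \<in> U_set E n"
    unfolding U_set_def using cyc by (simp add: algebra_simps)
  finally show ?thesis .
qed

theorem proposition3p7:
  fixes E :: "'v::finite \<Rightarrow> 'v \<Rightarrow> bool"
    and n :: int and \<mu> :: "'v option \<Rightarrow> int"
  assumes "simple_graph E"
  shows "mem_frac (monom \<mu> :: ('v, 'k::field) laurent)
           (dpow (ehrhart_ring E) (as_frac (ehrhart_ring E) (canonical_ideal E)) n)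
         \<longleftrightarrow> \<mu> \<in> U_set E n"
proof -
  note sg = assms
  have hR': "(ehrhart_ring E :: ('v, 'k) laurent set) = DD E 0" by (rule hR[OF sg])
  have hO: "(canonical_ideal E :: ('v, 'k) laurent set) = DD E 1" by (rule hOmega[OF sg])
  obtain \<rho> where P: "\<forall>c. validc E c \<longrightarrow> sig c \<rho> \<ge> 1" using P_lemma by blast
  have W: "\<And>c a. validc E c \<Longrightarrow> \<exists>\<nu>. sig c \<nu> = a \<and> \<nu> \<in> Dlat E a"
    using W_lemma[OF sg] by blast
  have asO: "as_frac (ehrhart_ring E) (canonical_ideal E) = (FF E 1 :: ('v, 'k) frac set)"
    unfolding as_frac_def FF_def frac_in_def using hO by simp
  have "dpow (ehrhart_ring E) (as_frac (ehrhart_ring E) (canonical_ideal E)) n = (FF E n :: ('v, 'k) frac set)"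
    using dpow_FF[OF hR' W P] asO by simp
  then have "mem_frac (monom \<mu> :: ('v, 'k) laurent)
           (dpow (ehrhart_ring E) (as_frac (ehrhart_ring E) (canonical_ideal E)) n) \<longleftrightarrow> \<mu> \<in> Dlat E n"
    using mem_frac_FF[OF hR' W P] by simp
  then show ?thesis using U_eq by blast
qed

end
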